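(* Let $n\in\mathbb N$ and $\lambda\in\mathbb C\setminus\{0\}$ satisfy $(n^2+i\lambda-\lambda^2)J_n(\lambda)+\lambda J_n'(\lambda)=0$. Then $i\lambda\in\sigma(P)$, and the function $u(r,\theta)=J_n(\lambda r)e^{in\theta}$ ($0\le r\le1$, $\theta\in\mathbb R/2\pi\mathbb Z$) is a nonzero element of $\operatorname{dom}(A)$ with $P(i\lambda)u=0$.
   Context: Disk case: $\Omega=\mathbb D=\{x\in\mathbb R^2:|x|<1\}$, $\Gamma=\Gamma_0=\partial\mathbb D$, written in polar coordinates $(r,\theta)$. $H=L^2(\mathbb D)\times L^2(\partial\mathbb D)$; $\operatorname{dom}(A)=\{u\in H^2(\mathbb D):u|_{\partial\mathbb D}\in H^2(\partial\mathbb D)\}$, identified with a subspace of $H$ via $u\mapsto(u,u|_{\partial\mathbb D})$, and $Au=(-\Delta u,\,-\partial_\theta^2u+\partial_ru|_{r=1})$; $BB^*(v,w)=(0,w)$. For $z\in\mathbb C$, $P(z)=A+zBB^*+z^2$ on $H$ with domain $\operatorname{dom}(A)$, and $\sigma(P)$ is the set of $z$ for which $P(z)$ has no inverse in $\mathcal L(H)$. $J_n(z)=\sum_{m\ge0}\frac{(-1)^m}{m!(m+n)!}(z/2)^{2m+n}$ is the Bessel function of the first kind of order $n$. *)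

theory Defs
  imports "HOL-Analysis.Analysis"
begin

text \<open>Points of the plane are pairs (x,y) :: real * real. The unit disk and its boundary
  (parametrised by the angle theta in [0, 2 pi], arc length measure d theta).\<close>

type_synonym pt = "real \<times> real"

definition Disk :: "pt set" where
  "Disk = ball 0 1"

definition circ_par :: "real set" where
  "circ_par = {0..2*pi}"

definition bessel_J :: "nat \<Rightarrow> complex \<Rightarrow> complex" where
  "bessel_J n z = (\<Sum>m. (-1)^m / (fact m * fact (m + n)) * (z / 2) ^ (2 * m + n))"

text \<open>Classical partial derivatives (0 = in x, otherwise in y) and iterated ones.\<close>

definition pd :: "nat \<Rightarrow> (pt \<Rightarrow> complex) \<Rightarrow> pt \<Rightarrow> complex" where
  "pd i f p = (if i = 0 then vector_derivative (\<lambda>t. f (t, snd p)) (at (fst p))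
               else vector_derivative (\<lambda>t. f (fst p, t)) (at (snd p)))"

fun pds :: "nat list \<Rightarrow> (pt \<Rightarrow> complex) \<Rightarrow> pt \<Rightarrow> complex" where
  "pds [] f = f"
| "pds (i # w) f = pd i (pds w f)"

definition smooth2 :: "(pt \<Rightarrow> complex) \<Rightarrow> bool" where
  "smooth2 \<phi> \<longleftrightarrow> (\<forall>w. continuous_on UNIV (pds w \<phi>) \<and>
      (\<forall>p. (\<lambda>t. pds w \<phi> (t, snd p)) differentiable (at (fst p)) \<and>
           (\<lambda>t. pds w \<phi> (fst p, t)) differentiable (at (snd p))))"

definition test_D :: "(pt \<Rightarrow> complex) \<Rightarrow> bool" where
  "test_D \<phi> \<longleftrightarrow> smooth2 \<phi> \<and> compact (closure {p. \<phi> p \<noteq> 0}) \<and> closure {p. \<phi> p \<noteq> 0} \<subseteq> Disk"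

definition L2_on :: "'a::euclidean_space set \<Rightarrow> ('a \<Rightarrow> complex) \<Rightarrow> bool" where
  "L2_on S f \<longleftrightarrow> set_borel_measurable lborel S f \<and> set_integrable lborel S (\<lambda>x. (cmod (f x))\<^sup>2)"

text \<open>v is the weak derivative d^w u (multi-index given as a word w of partials) on D.\<close>

definition weak_pd :: "nat list \<Rightarrow> (pt \<Rightarrow> complex) \<Rightarrow> (pt \<Rightarrow> complex) \<Rightarrow> bool" where
  "weak_pd w u v \<longleftrightarrow> (\<forall>\<phi>. test_D \<phi> \<longrightarrow>
     set_lebesgue_integral lborel Disk (\<lambda>p. u p * pds w \<phi> p)
       = (-1) ^ length w * set_lebesgue_integral lborel Disk (\<lambda>p. v p * \<phi> p))"

definition weak_lap :: "(pt \<Rightarrow> complex) \<Rightarrow> (pt \<Rightarrow> complex) \<Rightarrow> bool" where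
  "weak_lap u v \<longleftrightarrow> (\<forall>\<phi>. test_D \<phi> \<longrightarrow>
     set_lebesgue_integral lborel Disk (\<lambda>p. u p * (pds [0,0] \<phi> p + pds [1,1] \<phi> p))
       = set_lebesgue_integral lborel Disk (\<lambda>p. v p * \<phi> p))"

definition H2_disk :: "(pt \<Rightarrow> complex) \<Rightarrow> bool" where
  "H2_disk u \<longleftrightarrow> L2_on Disk u \<and> (\<forall>w. length w \<le> 2 \<longrightarrow> (\<exists>v. L2_on Disk v \<and> weak_pd w u v))"

text \<open>Functions on the circle are 2pi-periodic functions of theta. Test functions:
  smooth 2pi-periodic functions.\<close>

definition vd :: "(real \<Rightarrow> complex) \<Rightarrow> real \<Rightarrow> complex" where
  "vd \<psi> = (\<lambda>t. vector_derivative \<psi> (at t))"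

definition test_circ :: "(real \<Rightarrow> complex) \<Rightarrow> bool" where
  "test_circ \<psi> \<longleftrightarrow> (\<forall>t. \<psi> (t + 2*pi) = \<psi> t) \<and> (\<forall>k t. ((vd ^^ k) \<psi>) differentiable (at t))"

definition weak_d_circ :: "nat \<Rightarrow> (real \<Rightarrow> complex) \<Rightarrow> (real \<Rightarrow> complex) \<Rightarrow> bool" where
  "weak_d_circ k g h \<longleftrightarrow> (\<forall>\<psi>. test_circ \<psi> \<longrightarrow>
     set_lebesgue_integral lborel circ_par (\<lambda>t. g t * (vd ^^ k) \<psi> t)
       = (-1) ^ k * set_lebesgue_integral lborel circ_par (\<lambda>t. h t * \<psi> t))"

definition H2_circ :: "(real \<Rightarrow> complex) \<Rightarrow> bool" where
  "H2_circ g \<longleftrightarrow> (\<forall>t. g (t + 2*pi) = g t) \<and> L2_on circ_par g \<and>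
     (\<forall>k\<le>2. \<exists>h. L2_on circ_par h \<and> weak_d_circ k g h)"

definition bd :: "(pt \<Rightarrow> complex) \<Rightarrow> real \<Rightarrow> complex" where
  "bd u \<theta> = u (cos \<theta>, sin \<theta>)"

text \<open>dom(A): u in H^2(D) (taken in its continuous representative on the closed disk,
  so that the trace is the restriction to the circle) whose trace lies in H^2(dD).\<close>

definition dom_A :: "(pt \<Rightarrow> complex) \<Rightarrow> bool" where
  "dom_A u \<longleftrightarrow> H2_disk u \<and> continuous_on (cball 0 1) u \<and> H2_circ (bd u)"

text \<open>h is the normal derivative d_r u on dD, defined weakly via Green's formula
  int_{dD} h phi = int_D (Laplace u) phi + int_D grad u . grad phi.\<close>

definition normal_deriv :: "(pt \<Rightarrow> complex) \<Rightarrow> (real \<Rightarrow> complex) \<Rightarrow> bool" where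
  "normal_deriv u h \<longleftrightarrow> L2_on circ_par h \<and>
     (\<exists>v1 v2 l. weak_pd [0] u v1 \<and> weak_pd [1] u v2 \<and> weak_lap u l \<and>
       (\<forall>\<phi>. smooth2 \<phi> \<longrightarrow>
          set_lebesgue_integral lborel circ_par (\<lambda>t. h t * \<phi> (cos t, sin t))
          = set_lebesgue_integral lborel Disk (\<lambda>p. l p * \<phi> p)
            + set_lebesgue_integral lborel Disk (\<lambda>p. v1 p * pd 0 \<phi> p + v2 p * pd 1 \<phi> p)))"

text \<open>Elements of H = L^2(D) x L^2(dD), their (a.e.) equality and norm.\<close>

definition inH :: "(pt \<Rightarrow> complex) \<Rightarrow> (real \<Rightarrow> complex) \<Rightarrow> bool" where
  "inH f g \<longleftrightarrow> L2_on Disk f \<and> L2_on circ_par g"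

definition eqH :: "(pt \<Rightarrow> complex) \<Rightarrow> (real \<Rightarrow> complex) \<Rightarrow> (pt \<Rightarrow> complex) \<Rightarrow> (real \<Rightarrow> complex) \<Rightarrow> bool" where
  "eqH f g f' g' \<longleftrightarrow> (AE p in lborel. p \<in> Disk \<longrightarrow> f p = f' p) \<and>
                     (AE t in lborel. t \<in> circ_par \<longrightarrow> g t = g' t)"

definition normH :: "(pt \<Rightarrow> complex) \<Rightarrow> (real \<Rightarrow> complex) \<Rightarrow> real" where
  "normH f g = sqrt (set_lebesgue_integral lborel Disk (\<lambda>p. (cmod (f p))\<^sup>2)
                    + set_lebesgue_integral lborel circ_par (\<lambda>t. (cmod (g t))\<^sup>2))"

text \<open>P z u = (f, g) for u in dom(A), where
  P(z) u = A u + z B B^* u + z^2 u = (-Laplace u + z^2 u, -d_theta^2 u + d_r u + z u + z^2 u) on dD.\<close>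

definition P_eq :: "complex \<Rightarrow> (pt \<Rightarrow> complex) \<Rightarrow> (pt \<Rightarrow> complex) \<Rightarrow> (real \<Rightarrow> complex) \<Rightarrow> bool" where
  "P_eq z u f g \<longleftrightarrow> dom_A u \<and>
     (\<exists>l. weak_lap u l \<and> (AE p in lborel. p \<in> Disk \<longrightarrow> - l p + z\<^sup>2 * u p = f p)) \<and>
     (\<exists>h d2. normal_deriv u h \<and> weak_d_circ 2 (bd u) d2 \<and>
        (AE t in lborel. t \<in> circ_par \<longrightarrow> - d2 t + h t + z * bd u t + z\<^sup>2 * bd u t = g t))"

text \<open>P(z) has an inverse in L(H): a map R : H -> dom(A) with P(z) R = id_H,
  R P(z) = id on dom(A) (up to equality in H), and R bounded.\<close>

definition P_invertible :: "complex \<Rightarrow> bool" where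
  "P_invertible z \<longleftrightarrow> (\<exists>R :: (pt \<Rightarrow> complex) \<Rightarrow> (real \<Rightarrow> complex) \<Rightarrow> (pt \<Rightarrow> complex).
     (\<forall>f g. inH f g \<longrightarrow> P_eq z (R f g) f g) \<and>
     (\<forall>u f g. inH f g \<longrightarrow> P_eq z u f g \<longrightarrow> eqH (R f g) (bd (R f g)) u (bd u)) \<and>
     (\<exists>C. \<forall>f g. inH f g \<longrightarrow> normH (R f g) (bd (R f g)) \<le> C * normH f g))"

definition spec_P :: "complex set" where
  "spec_P = {z. \<not> P_invertible z}"

definition mode_polar :: "nat \<Rightarrow> complex \<Rightarrow> real \<Rightarrow> real \<Rightarrow> complex" where
  "mode_polar n lam r \<theta> = bessel_J n (lam * of_real r) * exp (\<i> * of_nat n * of_real \<theta>)"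

definition mode :: "nat \<Rightarrow> complex \<Rightarrow> pt \<Rightarrow> complex" where
  "mode n lam p = mode_polar n lam (norm p) (Arg (Complex (fst p) (snd p)))"

end

theory Submission
  imports Defs
begin


lemma Disk_iff: "((x,y) \<in> Disk) \<longleftrightarrow> x^2 + y^2 < 1"
  by (simp add: Disk_def norm_Pair real_sqrt_lt_1_iff)

lemma abs_lt_sqrt_iff: "\<bar>x::real\<bar> < sqrt a \<longleftrightarrow> x^2 < a"
  by (metis real_sqrt_abs real_sqrt_less_iff)

lemma Disk_ind_x:
  shows "indicator Disk (x,y) = (indicator {-sqrt(1-y^2)<..<sqrt(1-y^2)} x :: real)"
proof -
  have "(x^2 + y^2 < 1) \<longleftrightarrow> \<bar>x\<bar> < sqrt(1-y^2)"
    by (simp add: abs_lt_sqrt_iff algebra_simps)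
  also have "\<dots> \<longleftrightarrow> (-sqrt(1-y^2) < x \<and> x < sqrt(1-y^2))" by auto
  finally show ?thesis by (simp add: indicator_def Disk_iff)
qed

lemma Disk_ind_y:
  shows "indicator Disk (x,y) = (indicator {-sqrt(1-x^2)<..<sqrt(1-x^2)} y :: real)"
proof -
  have "(x^2 + y^2 < 1) \<longleftrightarrow> \<bar>y\<bar> < sqrt(1-x^2)"
    by (simp add: abs_lt_sqrt_iff algebra_simps)
  also have "\<dots> \<longleftrightarrow> (-sqrt(1-x^2) < y \<and> y < sqrt(1-x^2))" by auto
  finally show ?thesis by (simp add: indicator_def Disk_iff)
qed

lemma inner_FTC_x:
  fixes F Fx :: "pt \<Rightarrow> complex"
  assumes cFx: "continuous_on UNIV Fx"
    and dF: "\<And>x y. ((\<lambda>t. F (t,y)) has_vector_derivative Fx (x,y)) (at x)"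
  shows "(LBINT x. indicator Disk (x,y) *\<^sub>R Fx (x,y)) =
     indicator {-1<..<1} y *\<^sub>R (F (sqrt(1-y^2), y) - F (-sqrt(1-y^2), y))"
proof (cases "\<bar>y\<bar> < 1")
  case True
  define s where "s = sqrt (1-y^2)"
  have s0: "0 < s" unfolding s_def using True by (simp add: abs_square_less_1)
  have "(LBINT x. indicator Disk (x,y) *\<^sub>R Fx (x,y)) = (LBINT x : {-s<..<s}. Fx (x,y))"
    unfolding set_lebesgue_integral_def s_def by (simp add: Disk_ind_x)
  also have "\<dots> = (LBINT x = -s..s. Fx (x,y))"
    using s0 by (subst interval_integral_Ioo) auto
  also have "\<dots> = F (s,y) - F (-s,y)"
  proof (rule interval_integral_FTC_finite)
    show "continuous_on {min (- s) s..max (- s) s} (\<lambda>x. Fx (x, y))"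
      by (intro continuous_on_compose2[OF cFx] continuous_intros) auto
    show "((\<lambda>t. F (t,y)) has_vector_derivative Fx (x, y)) (at x within {min (- s) s..max (- s) s})" for x
      using dF has_vector_derivative_at_within by blast
  qed
  finally show ?thesis using True by (simp add: s_def indicator_def abs_less_iff)
next
  case False
  then have "1 \<le> \<bar>y\<bar>" by simp
  then have "1*1 \<le> \<bar>y\<bar>*\<bar>y\<bar>" by (intro mult_mono) auto
  then have "1 - y^2 \<le> 0" by (simp add: power2_eq_square)
  then have "sqrt (1-y^2) \<le> 0" by simp
  then have "indicator Disk (x,y) = (0::real)" for x by (simp add: Disk_ind_x)
  moreover have "y \<notin> {-1<..<1}" using False by auto
  ultimately show ?thesis by simp
qed

lemma set_integrable_Disk:
  fixes f :: "pt \<Rightarrow> complex"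
  assumes "continuous_on UNIV f"
  shows "set_integrable lborel Disk f"
proof (rule set_integrable_subset)
  show "set_integrable lborel (cball 0 1) f"
    unfolding set_integrable_def
    by (rule borel_integrable_compact) (auto intro: continuous_on_subset[OF assms])
  show "Disk \<in> sets lborel" unfolding Disk_def by simp
  show "Disk \<subseteq> cball 0 1" unfolding Disk_def by auto
qed

lemma Disk_iterated_x:
  fixes f :: "pt \<Rightarrow> complex"
  assumes "continuous_on UNIV f"
  shows "set_lebesgue_integral lborel Disk f = (LBINT y. LBINT x. indicator Disk (x,y) *\<^sub>R f (x,y))"
proof -
  have i: "integrable lborel (\<lambda>p. indicator Disk p *\<^sub>R f p)"
    using set_integrable_Disk[OF assms] unfolding set_integrable_def .
  have i2: "integrable (lborel \<Otimes>\<^sub>M lborel) (\<lambda>(x,y). indicator Disk (x,y) *\<^sub>R f (x,y))"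
    using i by (simp add: lborel_prod case_prod_beta')
  have "set_lebesgue_integral lborel Disk f = integral\<^sup>L (lborel \<Otimes>\<^sub>M lborel) (\<lambda>(x,y). indicator Disk (x,y) *\<^sub>R f (x,y))"
    unfolding set_lebesgue_integral_def by (simp add: lborel_prod case_prod_beta')
  also have "\<dots> = (LBINT y. LBINT x. indicator Disk (x,y) *\<^sub>R f (x,y))"
    using lborel_pair.integral_snd[OF i2] by simp
  finally show ?thesis .
qed

lemma Disk_iterated_y:
  fixes f :: "pt \<Rightarrow> complex"
  assumes "continuous_on UNIV f"
  shows "set_lebesgue_integral lborel Disk f = (LBINT x. LBINT y. indicator Disk (x,y) *\<^sub>R f (x,y))"
proof -
  have i: "integrable lborel (\<lambda>p. indicator Disk p *\<^sub>R f p)"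
    using set_integrable_Disk[OF assms] unfolding set_integrable_def .
  have i2: "integrable (lborel \<Otimes>\<^sub>M lborel) (\<lambda>p. indicator Disk p *\<^sub>R f p)"
    using i by (simp add: lborel_prod)
  have "set_lebesgue_integral lborel Disk f = integral\<^sup>L (lborel \<Otimes>\<^sub>M lborel) (\<lambda>p. indicator Disk p *\<^sub>R f p)"
    unfolding set_lebesgue_integral_def by (simp add: lborel_prod)
  also have "\<dots> = (LBINT x. LBINT y. indicator Disk (x,y) *\<^sub>R f (x,y))"
    using lborel_pair.integral_fst'[OF i2] by simp
  finally show ?thesis .
qed

lemma sin_3pi2: "sin (3*pi/2) = -1"
proof -
  have "3*pi/2 = pi/2 + pi" by simp
  then show ?thesis by (simp only: sin_add) simp
qed

lemma cos_3pi2: "cos (3*pi/2) = 0"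
proof -
  have "3*pi/2 = pi/2 + pi" by simp
  then show ?thesis by (simp only: cos_add) simp
qed

lemma sqrt_1_minus_sin2: "sqrt (1 - (sin t)^2) = \<bar>cos t\<bar>"
  by (simp add: cos_squared_eq[symmetric])

lemma sqrt_1_minus_cos2: "sqrt (1 - (cos t)^2) = \<bar>sin t\<bar>"
  by (simp add: sin_squared_eq[symmetric])

lemma cos_nonneg_4: "3*pi/2 \<le> t \<Longrightarrow> t \<le> 2*pi \<Longrightarrow> 0 \<le> cos t"
proof -
  assume a: "3*pi/2 \<le> t" "t \<le> 2*pi"
  have "cos t = cos (t - 2*pi)" by (simp add: cos_diff)
  also have "0 \<le> cos (t - 2*pi)" using a by (intro cos_ge_zero) auto
  finally show ?thesis by simp
qed

lemma cos_nonpos_23: "pi/2 \<le> t \<Longrightarrow> t \<le> 3*pi/2 \<Longrightarrow> cos t \<le> 0"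
proof -
  assume a: "pi/2 \<le> t" "t \<le> 3*pi/2"
  have "cos t = - cos (t - pi)" by (simp add: cos_diff)
  also have "0 \<le> cos (t - pi)" using a by (intro cos_ge_zero) auto
  then have "- cos (t - pi) \<le> 0" by simp
  finally show ?thesis by simp
qed

lemma circ_X:
  fixes F :: "pt \<Rightarrow> complex"
  assumes cF: "continuous_on UNIV F"
  shows "set_lebesgue_integral lborel circ_par (\<lambda>t. cos t *\<^sub>R F (cos t, sin t)) =
     (LBINT y=-1..1. F (sqrt(1-y^2),y) - F (-sqrt(1-y^2),y))"
proof -
  define fR where "fR y = F (sqrt(1-y^2),y)" for y
  define fL where "fL y = F (-sqrt(1-y^2),y)" for y
  define g where "g t = cos t *\<^sub>R F (cos t, sin t)" for t
  have cfR: "continuous_on UNIV fR" unfolding fR_def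
    by (intro continuous_on_compose2[OF cF] continuous_intros) auto
  have cfL: "continuous_on UNIV fL" unfolding fL_def
    by (intro continuous_on_compose2[OF cF] continuous_intros) auto
  have cg: "continuous_on UNIV g" unfolding g_def
    by (intro continuous_on_compose2[OF cF] continuous_intros) auto
  have ig: "interval_lebesgue_integrable lborel a b g" for a b :: real
    by (rule interval_integrable_isCont) (use cg in \<open>simp add: continuous_on_eq_continuous_at\<close>)
  have ifR: "interval_lebesgue_integrable lborel a b fR" for a b :: real
    by (rule interval_integrable_isCont) (use cfR in \<open>simp add: continuous_on_eq_continuous_at\<close>)
  have ifL: "interval_lebesgue_integrable lborel a b fL" for a b :: real
    by (rule interval_integrable_isCont) (use cfL in \<open>simp add: continuous_on_eq_continuous_at\<close>)
  have gsum: "(LBINT x=ereal a..ereal b. f x) + (LBINT x=ereal b..ereal c. f x) = (LBINT x=ereal a..ereal c. f x)"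
    if "\<And>a' b'. interval_lebesgue_integrable lborel (ereal a') (ereal b') f" for a b c :: real and f :: "real \<Rightarrow> complex"
    by (rule interval_integral_sum) (auto simp: min_def max_def intro!: that)
  have sub: "(LBINT t=a..b. cos t *\<^sub>R f (sin t)) = (LBINT y=sin a..sin b. f y)"
    if "a \<le> b" "continuous_on UNIV f" for a b and f :: "real \<Rightarrow> complex"
    by (rule interval_integral_substitution_finite)
       (auto intro!: derivative_eq_intros continuous_intros
             intro: continuous_on_subset[OF that(2)] simp: that(1))
  have "set_lebesgue_integral lborel circ_par g = (LBINT t=0..2*pi. g t)"
    unfolding circ_par_def using interval_integral_Icc[of 0 "2*pi" g] by (simp add: zero_ereal_def)
  also have "\<dots> = (LBINT t=0..pi/2. g t) + (LBINT t=pi/2..3*pi/2. g t) + (LBINT t=3*pi/2..2*pi. g t)"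
    using gsum[of g 0 "pi/2" "2*pi", OF ig] gsum[of g "pi/2" "3*pi/2" "2*pi", OF ig]
    unfolding zero_ereal_def by (metis add.assoc)
  also have "(LBINT t=0..pi/2. g t) = (LBINT t=0..pi/2. cos t *\<^sub>R fR (sin t))"
  proof (rule interval_integral_cong)
    fix t assume "t \<in> einterval (min 0 (ereal (pi / 2))) (max 0 (ereal (pi / 2)))"
    then have "0 \<le> t" "t \<le> pi/2" by (auto simp: einterval_iff min_def max_def)
    then have "0 \<le> cos t" by (intro cos_ge_zero) auto
    then show "g t = cos t *\<^sub>R fR (sin t)" by (simp add: g_def fR_def sqrt_1_minus_sin2)
  qed
  also have "\<dots> = (LBINT y=0..1. fR y)" using sub[of 0 "pi/2" fR] cfR by (simp add: zero_ereal_def one_ereal_def)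
  also have "(LBINT t=pi/2..3*pi/2. g t) = (LBINT t=pi/2..3*pi/2. cos t *\<^sub>R fL (sin t))"
  proof (rule interval_integral_cong)
    fix t assume "t \<in> einterval (min (ereal (pi / 2)) (ereal (3*pi / 2))) (max (ereal (pi / 2)) (ereal (3*pi / 2)))"
    then have "pi/2 \<le> t" "t \<le> 3*pi/2" by (auto simp: einterval_iff min_def max_def)
    then have "cos t \<le> 0" by (intro cos_nonpos_23) auto
    then show "g t = cos t *\<^sub>R fL (sin t)" by (simp add: g_def fL_def sqrt_1_minus_sin2)
  qed
  also have "\<dots> = (LBINT y=1..-1. fL y)" using sub[of "pi/2" "3*pi/2" fL] cfL by (simp add: sin_3pi2 zero_ereal_def one_ereal_def)
  also have "(LBINT t=3*pi/2..2*pi. g t) = (LBINT t=3*pi/2..2*pi. cos t *\<^sub>R fR (sin t))"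
  proof (rule interval_integral_cong)
    fix t assume "t \<in> einterval (min (ereal (3*pi / 2)) (ereal (2*pi))) (max (ereal (3*pi / 2)) (ereal (2*pi)))"
    then have "3*pi/2 \<le> t" "t \<le> 2*pi" by (auto simp: einterval_iff min_def max_def)
    then have "0 \<le> cos t" by (intro cos_nonneg_4) auto
    then show "g t = cos t *\<^sub>R fR (sin t)" by (simp add: g_def fR_def sqrt_1_minus_sin2)
  qed
  also have "\<dots> = (LBINT y=-1..0. fR y)" using sub[of "3*pi/2" "2*pi" fR] cfR by (simp add: sin_3pi2 zero_ereal_def one_ereal_def)
  also have "(LBINT y=0..1. fR y) + (LBINT y=1..-1. fL y) + (LBINT y=-1..0. fR y)
      = (LBINT y=-1..1. fR y) - (LBINT y=-1..1. fL y)"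
    using gsum[of fR "-1" 0 1, OF ifR] interval_integral_endpoints_reverse[of 1 "-1" fL]
    by (simp add: zero_ereal_def one_ereal_def algebra_simps)
  also have "\<dots> = (LBINT y=-1..1. fR y - fL y)"
    by (rule interval_lebesgue_integral_diff(2)[symmetric])
       (use ifR[of "-1" 1] ifL[of "-1" 1] in \<open>auto simp: one_ereal_def\<close>)
  finally show ?thesis unfolding g_def fR_def fL_def .
qed

lemma inner_FTC_y:
  fixes F Fy :: "pt \<Rightarrow> complex"
  assumes cFy: "continuous_on UNIV Fy"
    and dF: "\<And>x y. ((\<lambda>t. F (x,t)) has_vector_derivative Fy (x,y)) (at y)"
  shows "(LBINT y. indicator Disk (x,y) *\<^sub>R Fy (x,y)) =
     indicator {-1<..<1} x *\<^sub>R (F (x, sqrt(1-x^2)) - F (x, -sqrt(1-x^2)))"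
proof (cases "\<bar>x\<bar> < 1")
  case True
  define s where "s = sqrt (1-x^2)"
  have s0: "0 < s" unfolding s_def using True by (simp add: abs_square_less_1)
  have "(LBINT y. indicator Disk (x,y) *\<^sub>R Fy (x,y)) = (LBINT y : {-s<..<s}. Fy (x,y))"
    unfolding set_lebesgue_integral_def s_def by (simp add: Disk_ind_y)
  also have "\<dots> = (LBINT y = -s..s. Fy (x,y))"
    using s0 by (subst interval_integral_Ioo) auto
  also have "\<dots> = F (x,s) - F (x,-s)"
  proof (rule interval_integral_FTC_finite)
    show "continuous_on {min (- s) s..max (- s) s} (\<lambda>y. Fy (x, y))"
      by (intro continuous_on_compose2[OF cFy] continuous_intros) auto
    show "((\<lambda>t. F (x,t)) has_vector_derivative Fy (x, y)) (at y within {min (- s) s..max (- s) s})" for y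
      using dF has_vector_derivative_at_within by blast
  qed
  finally show ?thesis using True by (simp add: s_def indicator_def abs_less_iff)
next
  case False
  then have "1 \<le> \<bar>x\<bar>" by simp
  then have "1*1 \<le> \<bar>x\<bar>*\<bar>x\<bar>" by (intro mult_mono) auto
  then have "1 - x^2 \<le> 0" by (simp add: power2_eq_square)
  then have "sqrt (1-x^2) \<le> 0" by simp
  then have "indicator Disk (x,y) = (0::real)" for y by (simp add: Disk_ind_y)
  moreover have "x \<notin> {-1<..<1}" using False by auto
  ultimately show ?thesis by simp
qed

lemma circ_Y:
  fixes F :: "pt \<Rightarrow> complex"
  assumes cF: "continuous_on UNIV F"
  shows "set_lebesgue_integral lborel circ_par (\<lambda>t. sin t *\<^sub>R F (cos t, sin t)) =
     (LBINT x=-1..1. F (x, sqrt(1-x^2)) - F (x, -sqrt(1-x^2)))"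
proof -
  define fR where "fR x = F (x, sqrt(1-x^2))" for x
  define fL where "fL x = F (x, -sqrt(1-x^2))" for x
  define g where "g t = sin t *\<^sub>R F (cos t, sin t)" for t
  have cfR: "continuous_on UNIV fR" unfolding fR_def
    by (intro continuous_on_compose2[OF cF] continuous_intros) auto
  have cfL: "continuous_on UNIV fL" unfolding fL_def
    by (intro continuous_on_compose2[OF cF] continuous_intros) auto
  have cg: "continuous_on UNIV g" unfolding g_def
    by (intro continuous_on_compose2[OF cF] continuous_intros) auto
  have ig: "interval_lebesgue_integrable lborel a b g" for a b :: real
    by (rule interval_integrable_isCont) (use cg in \<open>simp add: continuous_on_eq_continuous_at\<close>)
  have ifR: "interval_lebesgue_integrable lborel a b fR" for a b :: real
    by (rule interval_integrable_isCont) (use cfR in \<open>simp add: continuous_on_eq_continuous_at\<close>)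
  have ifL: "interval_lebesgue_integrable lborel a b fL" for a b :: real
    by (rule interval_integrable_isCont) (use cfL in \<open>simp add: continuous_on_eq_continuous_at\<close>)
  have gsum: "(LBINT x=ereal a..ereal b. f x) + (LBINT x=ereal b..ereal c. f x) = (LBINT x=ereal a..ereal c. f x)"
    if "\<And>a' b'. interval_lebesgue_integrable lborel (ereal a') (ereal b') f" for a b c :: real and f :: "real \<Rightarrow> complex"
    by (rule interval_integral_sum) (auto simp: min_def max_def intro!: that)
  have sub: "(LBINT t=a..b. (- sin t) *\<^sub>R f (cos t)) = (LBINT y=cos a..cos b. f y)"
    if "a \<le> b" "continuous_on UNIV f" for a b and f :: "real \<Rightarrow> complex"
    by (rule interval_integral_substitution_finite)
       (auto intro!: derivative_eq_intros continuous_intros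
             intro: continuous_on_subset[OF that(2)] simp: that(1))
  have neg: "(LBINT t=a..b. h t) = - (LBINT t=a..b. - h t)" for a b :: ereal and h :: "real \<Rightarrow> complex"
    by (simp add: interval_lebesgue_integral_uminus)
  have "set_lebesgue_integral lborel circ_par g = (LBINT t=0..2*pi. g t)"
    unfolding circ_par_def using interval_integral_Icc[of 0 "2*pi" g] by (simp add: zero_ereal_def)
  also have "\<dots> = (LBINT t=0..pi. g t) + (LBINT t=pi..2*pi. g t)"
    using gsum[of g 0 pi "2*pi", OF ig]
    unfolding zero_ereal_def by (metis)
  also have "(LBINT t=0..pi. g t) = - (LBINT t=0..pi. (- sin t) *\<^sub>R fR (cos t))"
  proof (subst neg, rule arg_cong[where f=uminus], rule interval_integral_cong)
    fix t assume "t \<in> einterval (min 0 (ereal pi)) (max 0 (ereal pi))"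
    then have "0 \<le> t" "t \<le> pi" by (auto simp: einterval_iff min_def max_def)
    then have "0 \<le> sin t" by (intro sin_ge_zero) auto
    then show "- g t = (- sin t) *\<^sub>R fR (cos t)" by (simp add: g_def fR_def sqrt_1_minus_cos2)
  qed
  also have "\<dots> = - (LBINT y=1..-1. fR y)" using sub[of 0 pi fR] cfR by (simp add: zero_ereal_def one_ereal_def)
  also have "(LBINT t=pi..2*pi. g t) = - (LBINT t=pi..2*pi. (- sin t) *\<^sub>R fL (cos t))"
  proof (subst neg, rule arg_cong[where f=uminus], rule interval_integral_cong)
    fix t assume "t \<in> einterval (min (ereal pi) (ereal (2*pi))) (max (ereal pi) (ereal (2*pi)))"
    then have "pi \<le> t" "t \<le> 2*pi" by (auto simp: einterval_iff min_def max_def)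
    then have "0 \<le> sin (t - pi)" by (intro sin_ge_zero) auto
    then have "sin t \<le> 0" by (simp add: sin_diff)
    then show "- g t = (- sin t) *\<^sub>R fL (cos t)" by (simp add: g_def fL_def sqrt_1_minus_cos2)
  qed
  also have "\<dots> = - (LBINT y=-1..1. fL y)" using sub[of pi "2*pi" fL] cfL by (simp add: zero_ereal_def one_ereal_def)
  also have "- (LBINT y=1..-1. fR y) + - (LBINT y=-1..1. fL y)
      = (LBINT y=-1..1. fR y) - (LBINT y=-1..1. fL y)"
    using interval_integral_endpoints_reverse[of 1 "-1" fR]
    by (simp add: zero_ereal_def one_ereal_def algebra_simps)
  also have "\<dots> = (LBINT y=-1..1. fR y - fL y)"
    by (rule interval_lebesgue_integral_diff(2)[symmetric])
       (use ifR[of "-1" 1] ifL[of "-1" 1] in \<open>auto simp: one_ereal_def\<close>)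
  finally show ?thesis unfolding g_def fR_def fL_def .
qed

lemma GreenX:
  fixes F Fx :: "pt \<Rightarrow> complex"
  assumes cF: "continuous_on UNIV F" and cFx: "continuous_on UNIV Fx"
    and dF: "\<And>x y. ((\<lambda>t. F (t,y)) has_vector_derivative Fx (x,y)) (at x)"
  shows "set_lebesgue_integral lborel Disk Fx =
     set_lebesgue_integral lborel circ_par (\<lambda>t. cos t *\<^sub>R F (cos t, sin t))"
proof -
  have "set_lebesgue_integral lborel Disk Fx = (LBINT y. LBINT x. indicator Disk (x,y) *\<^sub>R Fx (x,y))"
    by (rule Disk_iterated_x[OF cFx])
  also have "\<dots> = (LBINT y. indicator {-1<..<1} y *\<^sub>R (F (sqrt(1-y^2), y) - F (-sqrt(1-y^2), y)))"
    by (simp add: inner_FTC_x[OF cFx dF])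
  also have "\<dots> = (LBINT y=-1..1. F (sqrt(1-y^2), y) - F (-sqrt(1-y^2), y))"
    by (subst interval_integral_Ioo) (auto simp: set_lebesgue_integral_def one_ereal_def)
  also have "\<dots> = set_lebesgue_integral lborel circ_par (\<lambda>t. cos t *\<^sub>R F (cos t, sin t))"
    by (rule circ_X[OF cF, symmetric])
  finally show ?thesis .
qed

lemma GreenY:
  fixes F Fy :: "pt \<Rightarrow> complex"
  assumes cF: "continuous_on UNIV F" and cFy: "continuous_on UNIV Fy"
    and dF: "\<And>x y. ((\<lambda>t. F (x,t)) has_vector_derivative Fy (x,y)) (at y)"
  shows "set_lebesgue_integral lborel Disk Fy =
     set_lebesgue_integral lborel circ_par (\<lambda>t. sin t *\<^sub>R F (cos t, sin t))"
proof -
  have "set_lebesgue_integral lborel Disk Fy = (LBINT x. LBINT y. indicator Disk (x,y) *\<^sub>R Fy (x,y))"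
    by (rule Disk_iterated_y[OF cFy])
  also have "\<dots> = (LBINT x. indicator {-1<..<1} x *\<^sub>R (F (x, sqrt(1-x^2)) - F (x, -sqrt(1-x^2))))"
    by (simp add: inner_FTC_y[OF cFy dF])
  also have "\<dots> = (LBINT x=-1..1. F (x, sqrt(1-x^2)) - F (x, -sqrt(1-x^2)))"
    by (subst interval_integral_Ioo) (auto simp: set_lebesgue_integral_def one_ereal_def)
  also have "\<dots> = set_lebesgue_integral lborel circ_par (\<lambda>t. sin t *\<^sub>R F (cos t, sin t))"
    by (rule circ_Y[OF cF, symmetric])
  finally show ?thesis .
qed



definition Kc :: "nat \<Rightarrow> nat \<Rightarrow> complex" where
  "Kc n m = (-1)^m / (fact m * fact (m+n))"

definition Kf :: "nat \<Rightarrow> complex \<Rightarrow> complex" where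
  "Kf n x = (\<Sum>m. Kc n m * x^m)"

lemma Kc_summable: "summable (\<lambda>m. Kc n m * x^m)"
proof (rule summable_comparison_test')
  show "summable (\<lambda>m. inverse (fact m) * (norm x)^m)" by (rule summable_exp)
  show "norm (Kc n m * x^m) \<le> inverse (fact m) * (norm x)^m" for m
  proof -
    have "norm (Kc n m * x^m) = (norm x)^m / (fact m * fact (m+n))"
      by (simp add: Kc_def norm_mult norm_divide norm_power)
    also have "\<dots> \<le> (norm x)^m / (fact m)"
      by (rule divide_left_mono) (auto simp: fact_ge_1)
    finally show ?thesis by (simp add: field_simps)
  qed
qed

lemma diffs_Kc: "diffs (Kc n) = (\<lambda>m. - Kc (Suc n) m)"
proof
  fix m
  have "diffs (Kc n) m = of_nat (Suc m) * ((-1)^(Suc m) / (fact (Suc m) * fact (Suc m + n)))"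
    by (simp add: diffs_def Kc_def)
  also have "\<dots> = - ((-1)^m / (fact m * fact (m + Suc n)))"
    by (simp add: fact_Suc field_simps del: of_nat_Suc)
  finally show "diffs (Kc n) m = - Kc (Suc n) m" by (simp add: Kc_def)
qed

lemma Kf_deriv: "(Kf n has_field_derivative - Kf (Suc n) x) (at x)"
proof -
  have "((\<lambda>x. \<Sum>m. Kc n m * x^m) has_field_derivative (\<Sum>m. diffs (Kc n) m * x^m)) (at x)"
    by (rule termdiffs_strong_converges_everywhere) (rule Kc_summable)
  moreover have "(\<Sum>m. diffs (Kc n) m * x^m) = - Kf (Suc n) x"
    unfolding diffs_Kc Kf_def using suminf_minus[OF Kc_summable[of "Suc n" x]] by simp
  ultimately show ?thesis unfolding Kf_def[abs_def] by simp
qed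

lemma isCont_Kf: "isCont (Kf n) x"
  using Kf_deriv by (rule DERIV_isCont)

lemma continuous_on_Kf[continuous_intros]:
  "continuous_on S f \<Longrightarrow> continuous_on S (\<lambda>x. Kf n (f x))"
  by (rule continuous_on_compose2[of UNIV "Kf n"]) (auto intro: continuous_at_imp_continuous_on isCont_Kf)

lemma Kf_chain[derivative_intros]:
  "(f has_field_derivative f') (at x within s) \<Longrightarrow>
   ((\<lambda>x. Kf n (f x)) has_field_derivative (- Kf (Suc n) (f x) * f')) (at x within s)"
  using DERIV_chain2[OF Kf_deriv] by blast

lemma Kf_0: "Kf n 0 = 1 / fact n"
proof -
  have "Kf n 0 = Kc n 0" unfolding Kf_def by (rule powser_zero)
  then show ?thesis by (simp add: Kc_def)
qed

lemma Kf_ode: "Kf n x = of_nat (n+1) * Kf (n+1) x - x * Kf (n+2) x"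
proof -
  define b where "b m = (case m of 0 \<Rightarrow> 0 | Suc k \<Rightarrow> Kc (n+2) k * x^m)" for m
  have s1: "(\<lambda>m. Kc (n+2) m * x^m) sums Kf (n+2) x"
    unfolding Kf_def using Kc_summable by (rule summable_sums)
  then have "(\<lambda>m. x * (Kc (n+2) m * x^m)) sums (x * Kf (n+2) x)"
    by (rule sums_mult)
  then have "(\<lambda>m. b (Suc m)) sums (x * Kf (n+2) x)"
    by (simp add: b_def algebra_simps)
  then have sb: "b sums (x * Kf (n+2) x)"
    by (subst (asm) sums_Suc_iff) (simp add: b_def)
  have s2: "(\<lambda>m. of_nat (n+1) * (Kc (n+1) m * x^m)) sums (of_nat (n+1) * Kf (n+1) x)"
    unfolding Kf_def using Kc_summable by (intro sums_mult summable_sums)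
  have s3: "(\<lambda>m. of_nat (n+1) * (Kc (n+1) m * x^m) - b m) sums (of_nat (n+1) * Kf (n+1) x - x * Kf (n+2) x)"
    using s2 sb by (rule sums_diff)
  have eq: "of_nat (n+1) * (Kc (n+1) m * x^m) - b m = Kc n m * x^m" for m
  proof (cases m)
    case 0
    then show ?thesis by (simp add: b_def Kc_def fact_Suc field_simps del: of_nat_Suc)
  next
    case (Suc k)
    have "of_nat (n+1) * (Kc (n+1) (Suc k)) - Kc (n+2) k = Kc n (Suc k)"
      by (simp add: Kc_def fact_Suc field_simps del: of_nat_Suc) (simp add: of_nat_Suc of_nat_add algebra_simps)
    then show ?thesis using Suc by (simp add: b_def algebra_simps)
  qed
  have "(\<lambda>m. Kc n m * x^m) sums (of_nat (n+1) * Kf (n+1) x - x * Kf (n+2) x)"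
    using s3 unfolding eq .
  then show ?thesis unfolding Kf_def by (simp add: sums_iff)
qed

lemma bessel_Kf: "bessel_J n z = (z/2)^n * Kf n (z^2/4)"
proof -
  have "(-1)^m / (fact m * fact (m + n)) * (z / 2) ^ (2 * m + n) = (z/2)^n * (Kc n m * (z^2/4)^m)" for m
  proof -
    have "(z/2)^2 = z^2/4" by (simp add: power_divide)
    moreover have "(z / 2) ^ (2 * m + n) = ((z/2)^2)^m * (z/2)^n"
      by (simp add: power_add power_mult)
    ultimately have "(z / 2) ^ (2 * m + n) = (z/2)^n * (z^2/4)^m" by (metis mult.commute)
    then show ?thesis by (simp add: Kc_def)
  qed
  then have "bessel_J n z = (\<Sum>m. (z/2)^n * (Kc n m * (z^2/4)^m))"
    unfolding bessel_J_def by simp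
  also have "\<dots> = (z/2)^n * Kf n (z^2/4)"
    unfolding Kf_def by (rule suminf_mult[OF Kc_summable])
  finally show ?thesis .
qed

lemma bessel_fun: "bessel_J n = (\<lambda>z. (z/2)^n * Kf n (z^2/4))"
  by (rule ext) (rule bessel_Kf)

lemma bessel_deriv:
  "deriv (bessel_J n) z = of_nat n * (z/2)^(n-1) / 2 * Kf n (z^2/4) - (z/2)^n * Kf (Suc n) (z^2/4) * (z/2)"
proof -
  have "((\<lambda>z. (z/2)^n * Kf n (z^2/4)) has_field_derivative
     (of_nat n * (z/2)^(n-1) / 2 * Kf n (z^2/4) - (z/2)^n * Kf (Suc n) (z^2/4) * (z/2))) (at z)"
    apply (auto intro!: derivative_eq_intros)
    done
  then show ?thesis unfolding bessel_fun by (rule DERIV_imp_deriv)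
qed

lemma bessel_zderiv:
  "z * deriv (bessel_J n) z = (z/2)^n * (of_nat n * Kf n (z^2/4) - z^2/2 * Kf (Suc n) (z^2/4))"
proof -
  have zA: "z * (of_nat n * (z/2)^(n-1) / 2) = of_nat n * (z/2)^n"
  proof (cases n)
    case (Suc m)
    have "z * (of_nat n * (z/2)^m / 2) = of_nat n * ((z/2) * (z/2)^m)" by (simp add: field_simps)
    then show ?thesis using Suc by (simp del: of_nat_Suc)
  qed simp
  have "z * deriv (bessel_J n) z = (z * (of_nat n * (z/2)^(n-1) / 2)) * Kf n (z^2/4) - (z/2)^n * Kf (Suc n) (z^2/4) * (z * (z/2))"
    unfolding bessel_deriv by (simp add: algebra_simps)
  also have "\<dots> = of_nat n * (z/2)^n * Kf n (z^2/4) - (z/2)^n * Kf (Suc n) (z^2/4) * (z^2/2)"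
    by (subst zA) (simp add: power2_eq_square)
  also have "\<dots> = (z/2)^n * (of_nat n * Kf n (z^2/4) - z^2/2 * Kf (Suc n) (z^2/4))"
    by (simp add: algebra_simps)
  finally show ?thesis .
qed



definition Wc :: "complex \<Rightarrow> complex \<Rightarrow> complex" where "Wc a b = a + \<i> * b"

definition Uc :: "nat \<Rightarrow> complex \<Rightarrow> complex \<Rightarrow> complex \<Rightarrow> complex \<Rightarrow> complex" where
  "Uc n c \<mu> a b = c * (Wc a b)^n * Kf n (\<mu> * (a^2 + b^2))"

definition Uxc :: "nat \<Rightarrow> complex \<Rightarrow> complex \<Rightarrow> complex \<Rightarrow> complex \<Rightarrow> complex" where
  "Uxc n c \<mu> a b = c * (of_nat n * (Wc a b)^(n-1) * Kf n (\<mu> * (a^2 + b^2))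
      - 2 * \<mu> * a * (Wc a b)^n * Kf (Suc n) (\<mu> * (a^2 + b^2)))"

definition Uyc :: "nat \<Rightarrow> complex \<Rightarrow> complex \<Rightarrow> complex \<Rightarrow> complex \<Rightarrow> complex" where
  "Uyc n c \<mu> a b = c * (\<i> * of_nat n * (Wc a b)^(n-1) * Kf n (\<mu> * (a^2 + b^2))
      - 2 * \<mu> * b * (Wc a b)^n * Kf (Suc n) (\<mu> * (a^2 + b^2)))"

definition Uxxc :: "nat \<Rightarrow> complex \<Rightarrow> complex \<Rightarrow> complex \<Rightarrow> complex \<Rightarrow> complex" where
  "Uxxc n c \<mu> a b = c * (of_nat n * of_nat (n-1) * (Wc a b)^(n-1-1) * Kf n (\<mu> * (a^2 + b^2))
     - 4 * \<mu> * a * of_nat n * (Wc a b)^(n-1) * Kf (Suc n) (\<mu> * (a^2 + b^2))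
     - 2 * \<mu> * (Wc a b)^n * Kf (Suc n) (\<mu> * (a^2 + b^2))
     + 4 * \<mu>^2 * a^2 * (Wc a b)^n * Kf (Suc (Suc n)) (\<mu> * (a^2 + b^2)))"

definition Uxyc :: "nat \<Rightarrow> complex \<Rightarrow> complex \<Rightarrow> complex \<Rightarrow> complex \<Rightarrow> complex" where
  "Uxyc n c \<mu> a b = c * (\<i> * of_nat n * of_nat (n-1) * (Wc a b)^(n-1-1) * Kf n (\<mu> * (a^2 + b^2))
     - 2 * \<mu> * b * of_nat n * (Wc a b)^(n-1) * Kf (Suc n) (\<mu> * (a^2 + b^2))
     - 2 * \<i> * \<mu> * a * of_nat n * (Wc a b)^(n-1) * Kf (Suc n) (\<mu> * (a^2 + b^2))
     + 4 * \<mu>^2 * a * b * (Wc a b)^n * Kf (Suc (Suc n)) (\<mu> * (a^2 + b^2)))"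

definition Uyyc :: "nat \<Rightarrow> complex \<Rightarrow> complex \<Rightarrow> complex \<Rightarrow> complex \<Rightarrow> complex" where
  "Uyyc n c \<mu> a b = c * (- of_nat n * of_nat (n-1) * (Wc a b)^(n-1-1) * Kf n (\<mu> * (a^2 + b^2))
     - 4 * \<i> * \<mu> * b * of_nat n * (Wc a b)^(n-1) * Kf (Suc n) (\<mu> * (a^2 + b^2))
     - 2 * \<mu> * (Wc a b)^n * Kf (Suc n) (\<mu> * (a^2 + b^2))
     + 4 * \<mu>^2 * b^2 * (Wc a b)^n * Kf (Suc (Suc n)) (\<mu> * (a^2 + b^2)))"

lemma Uc_dx: "((\<lambda>a. Uc n c \<mu> a b) has_field_derivative Uxc n c \<mu> a b) (at a)"
  unfolding Uc_def Uxc_def Wc_def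
  by (auto intro!: derivative_eq_intros simp: algebra_simps)

lemma Uc_dy: "((\<lambda>b. Uc n c \<mu> a b) has_field_derivative Uyc n c \<mu> a b) (at b)"
  unfolding Uc_def Uyc_def Wc_def
  by (auto intro!: derivative_eq_intros simp: algebra_simps)

lemma Uxc_dx: "((\<lambda>a. Uxc n c \<mu> a b) has_field_derivative Uxxc n c \<mu> a b) (at a)"
  unfolding Uxc_def Uxxc_def Wc_def
  by (auto intro!: derivative_eq_intros simp: algebra_simps power2_eq_square)

lemma Uxc_dy: "((\<lambda>b. Uxc n c \<mu> a b) has_field_derivative Uxyc n c \<mu> a b) (at b)"
  unfolding Uxc_def Uxyc_def Wc_def
  by (auto intro!: derivative_eq_intros simp: algebra_simps power2_eq_square)

lemma Uyc_dx: "((\<lambda>a. Uyc n c \<mu> a b) has_field_derivative Uxyc n c \<mu> a b) (at a)"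
  unfolding Uyc_def Uxyc_def Wc_def
  by (auto intro!: derivative_eq_intros simp: algebra_simps power2_eq_square)

lemma Uyc_dy: "((\<lambda>b. Uyc n c \<mu> a b) has_field_derivative Uyyc n c \<mu> a b) (at b)"
  unfolding Uyc_def Uyyc_def Wc_def
  by (auto intro!: derivative_eq_intros simp: algebra_simps power2_eq_square)



definition lift :: "(complex \<Rightarrow> complex \<Rightarrow> complex) \<Rightarrow> pt \<Rightarrow> complex" where
  "lift G p = G (of_real (fst p)) (of_real (snd p))"

lemma lift_dx:
  assumes "\<And>a b. ((\<lambda>a. G a b) has_field_derivative Gx a b) (at a)"
  shows "((\<lambda>t. lift G (t,y)) has_vector_derivative lift Gx (x,y)) (at x)"
  unfolding lift_def using has_vector_derivative_real_field[OF assms] by simp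

lemma lift_dy:
  assumes "\<And>a b. ((\<lambda>b. G a b) has_field_derivative Gy a b) (at b)"
  shows "((\<lambda>t. lift G (x,t)) has_vector_derivative lift Gy (x,y)) (at y)"
  unfolding lift_def using has_vector_derivative_real_field[OF assms] by simp

lemma pd0_lift:
  assumes "\<And>a b. ((\<lambda>a. G a b) has_field_derivative Gx a b) (at a)"
  shows "pd 0 (lift G) = lift Gx"
proof
  fix p :: pt
  obtain x y where p: "p = (x,y)" by (cases p)
  show "pd 0 (lift G) p = lift Gx p"
    unfolding p pd_def using vector_derivative_at[OF lift_dx[OF assms]] by simp
qed

lemma pd1_lift:
  assumes "\<And>a b. ((\<lambda>b. G a b) has_field_derivative Gy a b) (at b)"
    and that: "i \<noteq> 0"
  shows "pd i (lift G) = lift Gy"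
proof
  fix p :: pt
  obtain x y where p: "p = (x,y)" by (cases p)
  show "pd i (lift G) p = lift Gy p"
    unfolding p pd_def using that vector_derivative_at[OF lift_dy[OF assms(1)]] by simp
qed

lemma pd_ne0: "i \<noteq> 0 \<Longrightarrow> pd i = pd 1"
  by (rule ext)+ (simp add: pd_def)

definition good :: "(pt \<Rightarrow> complex) \<Rightarrow> bool" where
  "good V \<longleftrightarrow> continuous_on UNIV V \<and> continuous_on UNIV (pd 0 V) \<and> continuous_on UNIV (pd 1 V) \<and>
     (\<forall>p. (\<lambda>t. V (t, snd p)) differentiable (at (fst p)) \<and> (\<lambda>t. V (fst p, t)) differentiable (at (snd p)))"

lemma good_dx: "good V \<Longrightarrow> ((\<lambda>t. V (t,y)) has_vector_derivative pd 0 V (x,y)) (at x)"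
  unfolding good_def pd_def using vector_derivative_works by fastforce

lemma good_dy: "good V \<Longrightarrow> ((\<lambda>t. V (x,t)) has_vector_derivative pd 1 V (x,y)) (at y)"
  unfolding good_def pd_def using vector_derivative_works by fastforce

lemma IBP_x:
  fixes V \<psi> :: "pt \<Rightarrow> complex"
  assumes V: "good V" and P: "good \<psi>" and van: "\<And>t. \<psi> (cos t, sin t) = 0"
  shows "set_lebesgue_integral lborel Disk (\<lambda>p. V p * pd 0 \<psi> p) =
       - set_lebesgue_integral lborel Disk (\<lambda>p. pd 0 V p * \<psi> p)"
proof -
  have c: "continuous_on UNIV V" "continuous_on UNIV (pd 0 V)" "continuous_on UNIV \<psi>" "continuous_on UNIV (pd 0 \<psi>)"
    using V P unfolding good_def by auto
  have c1: "continuous_on UNIV (\<lambda>p. V p * pd 0 \<psi> p)" "continuous_on UNIV (\<lambda>p. pd 0 V p * \<psi> p)"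
    using c by (auto intro!: continuous_intros)
  have "set_lebesgue_integral lborel Disk (\<lambda>p. V p * pd 0 \<psi> p + pd 0 V p * \<psi> p) =
     set_lebesgue_integral lborel circ_par (\<lambda>t. cos t *\<^sub>R (V (cos t, sin t) * \<psi> (cos t, sin t)))"
  proof (rule GreenX[where F="\<lambda>p. V p * \<psi> p"])
    show "continuous_on UNIV (\<lambda>p. V p * \<psi> p)" using c by (auto intro!: continuous_intros)
    show "continuous_on UNIV (\<lambda>p. V p * pd 0 \<psi> p + pd 0 V p * \<psi> p)" using c by (auto intro!: continuous_intros)
    show "((\<lambda>t. V (t, y) * \<psi> (t, y)) has_vector_derivative V (x, y) * pd 0 \<psi> (x, y) + pd 0 V (x, y) * \<psi> (x, y)) (at x)" for x y
      using has_vector_derivative_mult[OF good_dx[OF V] good_dx[OF P]] by simp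
  qed
  also have "\<dots> = 0" using van by simp
  finally have "set_lebesgue_integral lborel Disk (\<lambda>p. V p * pd 0 \<psi> p + pd 0 V p * \<psi> p) = 0" .
  moreover have "set_lebesgue_integral lborel Disk (\<lambda>p. V p * pd 0 \<psi> p + pd 0 V p * \<psi> p) =
     set_lebesgue_integral lborel Disk (\<lambda>p. V p * pd 0 \<psi> p) + set_lebesgue_integral lborel Disk (\<lambda>p. pd 0 V p * \<psi> p)"
    by (rule set_integral_add) (rule set_integrable_Disk, rule c1)+
  ultimately show ?thesis by (simp add: eq_neg_iff_add_eq_0)
qed

lemma IBP_y:
  fixes V \<psi> :: "pt \<Rightarrow> complex"
  assumes V: "good V" and P: "good \<psi>" and van: "\<And>t. \<psi> (cos t, sin t) = 0"
  shows "set_lebesgue_integral lborel Disk (\<lambda>p. V p * pd 1 \<psi> p) =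
       - set_lebesgue_integral lborel Disk (\<lambda>p. pd 1 V p * \<psi> p)"
proof -
  have c: "continuous_on UNIV V" "continuous_on UNIV (pd 1 V)" "continuous_on UNIV \<psi>" "continuous_on UNIV (pd 1 \<psi>)"
    using V P unfolding good_def by auto
  have c1: "continuous_on UNIV (\<lambda>p. V p * pd 1 \<psi> p)" "continuous_on UNIV (\<lambda>p. pd 1 V p * \<psi> p)"
    using c by (auto intro!: continuous_intros)
  have "set_lebesgue_integral lborel Disk (\<lambda>p. V p * pd 1 \<psi> p + pd 1 V p * \<psi> p) =
     set_lebesgue_integral lborel circ_par (\<lambda>t. sin t *\<^sub>R (V (cos t, sin t) * \<psi> (cos t, sin t)))"
  proof (rule GreenY[where F="\<lambda>p. V p * \<psi> p"])
    show "continuous_on UNIV (\<lambda>p. V p * \<psi> p)" using c by (auto intro!: continuous_intros)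
    show "continuous_on UNIV (\<lambda>p. V p * pd 1 \<psi> p + pd 1 V p * \<psi> p)" using c by (auto intro!: continuous_intros)
    show "((\<lambda>t. V (x, t) * \<psi> (x, t)) has_vector_derivative V (x, y) * pd 1 \<psi> (x, y) + pd 1 V (x, y) * \<psi> (x, y)) (at y)" for x y
      using has_vector_derivative_mult[OF good_dy[OF V] good_dy[OF P]] by simp
  qed
  also have "\<dots> = 0" using van by simp
  finally have "set_lebesgue_integral lborel Disk (\<lambda>p. V p * pd 1 \<psi> p + pd 1 V p * \<psi> p) = 0" .
  moreover have "set_lebesgue_integral lborel Disk (\<lambda>p. V p * pd 1 \<psi> p + pd 1 V p * \<psi> p) =
     set_lebesgue_integral lborel Disk (\<lambda>p. V p * pd 1 \<psi> p) + set_lebesgue_integral lborel Disk (\<lambda>p. pd 1 V p * \<psi> p)"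
    by (rule set_integral_add) (rule set_integrable_Disk, rule c1)+
  ultimately show ?thesis by (simp add: eq_neg_iff_add_eq_0)
qed

lemma IBP:
  assumes V: "good V" and P: "good \<psi>" and van: "\<And>t. \<psi> (cos t, sin t) = 0"
  shows "set_lebesgue_integral lborel Disk (\<lambda>p. V p * pd i \<psi> p) =
       - set_lebesgue_integral lborel Disk (\<lambda>p. pd i V p * \<psi> p)"
proof (cases "i = 0")
  case True then show ?thesis using IBP_x[OF assms] by simp
next
  case False then show ?thesis using IBP_y[OF assms] by (simp only: pd_ne0[OF False])
qed

lemma smooth2_good: "smooth2 \<phi> \<Longrightarrow> good (pds w \<phi>)"
proof -
  assume s: "smooth2 \<phi>"
  have c: "\<And>w. continuous_on UNIV (pds w \<phi>)" using s unfolding smooth2_def by simp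
  have d: "\<And>w p. (\<lambda>t. pds w \<phi> (t, snd p)) differentiable (at (fst p)) \<and>
           (\<lambda>t. pds w \<phi> (fst p, t)) differentiable (at (snd p))" using s unfolding smooth2_def by simp
  have "continuous_on UNIV (pd 0 (pds w \<phi>))" using c[of "0#w"] by simp
  moreover have "continuous_on UNIV (pd 1 (pds w \<phi>))" using c[of "1#w"] by simp
  ultimately show ?thesis unfolding good_def using c[of w] d[of w] by blast
qed

lemma test_vanish:
  assumes "test_D \<phi>"
  shows "pds w \<phi> (cos t, sin t) = 0"
proof -
  define Oc where "Oc = - closure {p. \<phi> p \<noteq> 0}"
  have oO: "open Oc" unfolding Oc_def by auto
  have sub: "closure {p. \<phi> p \<noteq> 0} \<subseteq> Disk" using assms unfolding test_D_def by auto
  have "(cos t, sin t) \<notin> Disk" by (simp add: Disk_iff)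
  then have inO: "(cos t, sin t) \<in> Oc" using sub unfolding Oc_def by auto
  have "\<forall>p\<in>Oc. pds w \<phi> p = 0"
  proof (induction w)
    case Nil
    show ?case
    proof
      fix p assume "p \<in> Oc"
      then have "p \<notin> closure {p. \<phi> p \<noteq> 0}" unfolding Oc_def by simp
      then have "p \<notin> {p. \<phi> p \<noteq> 0}" using closure_subset by (metis subsetD)
      then show "pds [] \<phi> p = 0" by simp
    qed
  next
    case (Cons i w)
    show ?case
    proof
      fix p assume pO: "p \<in> Oc"
      obtain x y where p: "p = (x,y)" by (cases p)
      show "pds (i # w) \<phi> p = 0"
      proof (cases "i = 0")
        case True
        let ?S = "(\<lambda>t. (t, y)) -` Oc"
        have d0: "((\<lambda>t. 0::complex) has_vector_derivative 0) (at x)" by (rule has_vector_derivative_const)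
        moreover have "open ?S"
          by (rule continuous_open_vimage[OF oO]) (simp add: continuous_Pair)
        moreover have "x \<in> ?S" using pO p by simp
        moreover have "0 = pds w \<phi> (t, y)" if "t \<in> ?S" for t
          using Cons.IH that by simp
        ultimately have "((\<lambda>t. pds w \<phi> (t, y)) has_vector_derivative 0) (at x)"
          by (rule has_vector_derivative_transform_within_open)
        then show ?thesis using True p by (simp add: pd_def vector_derivative_at)
      next
        case False
        let ?S = "(\<lambda>t. (x, t)) -` Oc"
        have d0: "((\<lambda>t. 0::complex) has_vector_derivative 0) (at y)" by (rule has_vector_derivative_const)
        moreover have "open ?S"
          by (rule continuous_open_vimage[OF oO]) (simp add: continuous_Pair)
        moreover have "y \<in> ?S" using pO p by simp
        moreover have "0 = pds w \<phi> (x, t)" if "t \<in> ?S" for t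
          using Cons.IH that by simp
        ultimately have "((\<lambda>t. pds w \<phi> (x, t)) has_vector_derivative 0) (at y)"
          by (rule has_vector_derivative_transform_within_open)
        then show ?thesis using False p by (simp add: pd_def vector_derivative_at)
      qed
    qed
  qed
  then show ?thesis using inO by blast
qed



lemma set_integrable_Disk':
  fixes f :: "pt \<Rightarrow> 'b::{banach, second_countable_topology}"
  assumes "continuous_on UNIV f"
  shows "set_integrable lborel Disk f"
proof (rule set_integrable_subset)
  show "set_integrable lborel (cball 0 1) f"
    unfolding set_integrable_def
    by (rule borel_integrable_compact) (auto intro: continuous_on_subset[OF assms])
  show "Disk \<in> sets lborel" unfolding Disk_def by simp
  show "Disk \<subseteq> cball 0 1" unfolding Disk_def by auto
qed

lemma set_integrable_circ:
  fixes f :: "real \<Rightarrow> 'b::{banach, second_countable_topology}"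
  assumes "continuous_on UNIV f"
  shows "set_integrable lborel circ_par f"
  unfolding set_integrable_def circ_par_def
  by (rule borel_integrable_compact) (auto intro: continuous_on_subset[OF assms])

lemma L2_Disk:
  fixes f :: "pt \<Rightarrow> complex"
  assumes c: "continuous_on UNIV f"
  shows "L2_on Disk f"
proof -
  have "set_integrable lborel Disk f" by (rule set_integrable_Disk'[OF c])
  then have "set_borel_measurable lborel Disk f"
    unfolding set_integrable_def set_borel_measurable_def by (rule borel_measurable_integrable)
  moreover have "set_integrable lborel Disk (\<lambda>x. (cmod (f x))\<^sup>2)"
    by (rule set_integrable_Disk') (auto intro!: continuous_intros c)
  ultimately show ?thesis unfolding L2_on_def by simp
qed

lemma L2_circ:
  fixes f :: "real \<Rightarrow> complex"
  assumes c: "continuous_on UNIV f"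
  shows "L2_on circ_par f"
proof -
  have "set_integrable lborel circ_par f" by (rule set_integrable_circ[OF c])
  then have "set_borel_measurable lborel circ_par f"
    unfolding set_integrable_def set_borel_measurable_def by (rule borel_measurable_integrable)
  moreover have "set_integrable lborel circ_par (\<lambda>x. (cmod (f x))\<^sup>2)"
    by (rule set_integrable_circ) (auto intro!: continuous_intros c)
  ultimately show ?thesis unfolding L2_on_def by simp
qed

lemma good_pd_cont: "good V \<Longrightarrow> continuous_on UNIV (pd j V)"
proof (cases "j = 0")
  case False then show "good V \<Longrightarrow> ?thesis" by (simp only: pd_ne0[OF False] good_def)
qed (simp add: good_def)

lemma good_cont: "good V \<Longrightarrow> continuous_on UNIV V"
  by (simp add: good_def)

definition good2 :: "(pt \<Rightarrow> complex) \<Rightarrow> bool" where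
  "good2 U \<longleftrightarrow> good U \<and> good (pd 0 U) \<and> good (pd 1 U)"

lemma good2_pd: "good2 U \<Longrightarrow> good (pd i U)"
proof (cases "i = 0")
  case False then show "good2 U \<Longrightarrow> ?thesis" by (simp only: pd_ne0[OF False] good2_def)
qed (simp add: good2_def)

lemma weak_all:
  assumes U: "good2 U" and T: "test_D \<phi>" and w: "length w \<le> 2"
  shows "set_lebesgue_integral lborel Disk (\<lambda>p. U p * pds w \<phi> p) =
     (-1)^length w * set_lebesgue_integral lborel Disk (\<lambda>p. pds (rev w) U p * \<phi> p)"
proof -
  have s: "smooth2 \<phi>" using T unfolding test_D_def by simp
  have gU: "good U" using U unfolding good2_def by simp
  have gP: "good (pds v \<phi>)" for v using smooth2_good[OF s] .
  have van: "pds v \<phi> (cos t, sin t) = 0" for v t using test_vanish[OF T] .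
  consider "w = []" | i where "w = [i]" | i j where "w = [i,j]"
    using w by (cases w; cases "tl w"; auto)
  then show ?thesis
  proof cases
    case 1 then show ?thesis by simp
  next
    case (2 i)
    have "set_lebesgue_integral lborel Disk (\<lambda>p. U p * pd i (pds [] \<phi>) p) =
       - set_lebesgue_integral lborel Disk (\<lambda>p. pd i U p * pds [] \<phi> p)"
      by (rule IBP[OF gU gP van])
    then show ?thesis using 2 by simp
  next
    case (3 i j)
    have "set_lebesgue_integral lborel Disk (\<lambda>p. U p * pd i (pds [j] \<phi>) p) =
       - set_lebesgue_integral lborel Disk (\<lambda>p. pd i U p * pds [j] \<phi> p)"
      by (rule IBP[OF gU gP van])
    also have "set_lebesgue_integral lborel Disk (\<lambda>p. pd i U p * pds [j] \<phi> p) =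
       set_lebesgue_integral lborel Disk (\<lambda>p. pd i U p * pd j (pds [] \<phi>) p)" by simp
    also have "\<dots> = - set_lebesgue_integral lborel Disk (\<lambda>p. pd j (pd i U) p * pds [] \<phi> p)"
      by (rule IBP[OF good2_pd[OF U] gP van])
    finally show ?thesis using 3 by simp
  qed
qed

lemma pds_rev_cont:
  assumes U: "good2 U" and w: "length w \<le> 2"
  shows "continuous_on UNIV (pds (rev w) U)"
proof -
  consider "w = []" | i where "w = [i]" | i j where "w = [i,j]"
    using w by (cases w; cases "tl w"; auto)
  then show ?thesis
  proof cases
    case 1 then show ?thesis using U by (simp add: good2_def good_def)
  next
    case (2 i) then show ?thesis using U by (simp add: good2_def good_pd_cont)
  next
    case (3 i j) then show ?thesis using good_pd_cont[OF good2_pd[OF U]] by simp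
  qed
qed

lemma H2_disk_good2:
  assumes U: "good2 U"
  shows "H2_disk U"
  unfolding H2_disk_def
proof (intro conjI allI impI)
  show "L2_on Disk U" using U by (intro L2_Disk) (simp add: good2_def good_def)
  fix w :: "nat list" assume w: "length w \<le> 2"
  show "\<exists>v. L2_on Disk v \<and> weak_pd w U v"
  proof (intro exI conjI)
    show "L2_on Disk (pds (rev w) U)" by (rule L2_Disk[OF pds_rev_cont[OF U w]])
    show "weak_pd w U (pds (rev w) U)"
      unfolding weak_pd_def using weak_all[OF U _ w] by blast
  qed
qed

definition lapl :: "(pt \<Rightarrow> complex) \<Rightarrow> pt \<Rightarrow> complex" where
  "lapl U p = pd 0 (pd 0 U) p + pd 1 (pd 1 U) p"

lemma weak_lap_good2:
  assumes U: "good2 U"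
  shows "weak_lap U (lapl U)"
  unfolding weak_lap_def
proof (intro allI impI)
  fix \<phi> assume T: "test_D \<phi>"
  have s: "smooth2 \<phi>" using T unfolding test_D_def by simp
  have cP: "continuous_on UNIV (pds v \<phi>)" for v using smooth2_good[OF s] by (simp add: good_def)
  have cU: "continuous_on UNIV U" using U by (simp add: good2_def good_def)
  have c00: "continuous_on UNIV (pd 0 (pd 0 U))" "continuous_on UNIV (pd 1 (pd 1 U))"
    using good_pd_cont[OF good2_pd[OF U]] by auto
  have "set_lebesgue_integral lborel Disk (\<lambda>p. U p * (pds [0,0] \<phi> p + pds [1,1] \<phi> p)) =
     set_lebesgue_integral lborel Disk (\<lambda>p. U p * pds [0,0] \<phi> p + U p * pds [1,1] \<phi> p)"
    by (simp add: distrib_left)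
  also have "\<dots> = set_lebesgue_integral lborel Disk (\<lambda>p. U p * pds [0,0] \<phi> p) + set_lebesgue_integral lborel Disk (\<lambda>p. U p * pds [1,1] \<phi> p)"
  proof -
    have "set_integrable lborel Disk (\<lambda>p. U p * pds [0,0] \<phi> p)" "set_integrable lborel Disk (\<lambda>p. U p * pds [1,1] \<phi> p)"
      by (rule set_integrable_Disk'; intro continuous_intros cU cP)+
    then show ?thesis by (rule set_integral_add(2))
  qed
  also have "\<dots> = set_lebesgue_integral lborel Disk (\<lambda>p. pd 0 (pd 0 U) p * \<phi> p) + set_lebesgue_integral lborel Disk (\<lambda>p. pd 1 (pd 1 U) p * \<phi> p)"
    using weak_all[OF U T, of "[0,0]"] weak_all[OF U T, of "[1,1]"] by simp
  also have "\<dots> = set_lebesgue_integral lborel Disk (\<lambda>p. pd 0 (pd 0 U) p * \<phi> p + pd 1 (pd 1 U) p * \<phi> p)"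
  proof -
    have "set_integrable lborel Disk (\<lambda>p. pd 0 (pd 0 U) p * \<phi> p)" "set_integrable lborel Disk (\<lambda>p. pd 1 (pd 1 U) p * \<phi> p)"
      by (rule set_integrable_Disk'; intro continuous_intros c00 cP[of "[]", simplified])+
    then show ?thesis by (rule set_integral_add(2)[symmetric])
  qed
  also have "\<dots> = set_lebesgue_integral lborel Disk (\<lambda>p. lapl U p * \<phi> p)"
    by (simp add: lapl_def distrib_right)
  finally show "set_lebesgue_integral lborel Disk (\<lambda>p. U p * (pds [0, 0] \<phi> p + pds [1, 1] \<phi> p)) =
      set_lebesgue_integral lborel Disk (\<lambda>p. lapl U p * \<phi> p)" .
qed



definition hU :: "(pt \<Rightarrow> complex) \<Rightarrow> real \<Rightarrow> complex" where
  "hU U t = of_real (cos t) * pd 0 U (cos t, sin t) + of_real (sin t) * pd 1 U (cos t, sin t)"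

lemma normal_deriv_good2:
  assumes U: "good2 U"
  shows "normal_deriv U (hU U)"
proof -
  define A where "A = pd 0 U"
  define B where "B = pd 1 U"
  have gA: "good A" unfolding A_def using good2_pd[OF U] .
  have gB: "good B" unfolding B_def using good2_pd[OF U] .
  have cA: "continuous_on UNIV A" "continuous_on UNIV (pd 0 A)" using gA by (auto simp: good_def)
  have cB: "continuous_on UNIV B" "continuous_on UNIV (pd 1 B)" using gB by (auto simp: good_def)
  have ch: "continuous_on UNIV (hU U)"
    unfolding hU_def A_def[symmetric] B_def[symmetric]
    by (intro continuous_intros continuous_on_compose2[OF cA(1)] continuous_on_compose2[OF cB(1)]) auto
  have w0: "weak_pd [0] U A" and w1: "weak_pd [1] U B"
    unfolding weak_pd_def A_def B_def using weak_all[OF U, of _ "[0]"] weak_all[OF U, of _ "[1]"] by auto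
  have wl: "weak_lap U (lapl U)" by (rule weak_lap_good2[OF U])
  have main: "set_lebesgue_integral lborel circ_par (\<lambda>t. hU U t * \<phi> (cos t, sin t))
          = set_lebesgue_integral lborel Disk (\<lambda>p. lapl U p * \<phi> p)
            + set_lebesgue_integral lborel Disk (\<lambda>p. A p * pd 0 \<phi> p + B p * pd 1 \<phi> p)"
    if s: "smooth2 \<phi>" for \<phi>
  proof -
    have g\<phi>: "good \<phi>" using smooth2_good[OF s, of "[]"] by simp
    have c\<phi>: "continuous_on UNIV \<phi>" "continuous_on UNIV (pd 0 \<phi>)" "continuous_on UNIV (pd 1 \<phi>)"
      using g\<phi> by (auto simp: good_def)
    have GX: "set_lebesgue_integral lborel Disk (\<lambda>p. A p * pd 0 \<phi> p + pd 0 A p * \<phi> p) =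
      set_lebesgue_integral lborel circ_par (\<lambda>t. cos t *\<^sub>R (A (cos t, sin t) * \<phi> (cos t, sin t)))"
    proof (rule GreenX[where F="\<lambda>p. A p * \<phi> p"])
      show "continuous_on UNIV (\<lambda>p. A p * \<phi> p)" using cA c\<phi> by (auto intro!: continuous_intros)
      show "continuous_on UNIV (\<lambda>p. A p * pd 0 \<phi> p + pd 0 A p * \<phi> p)" using cA c\<phi> by (auto intro!: continuous_intros)
      show "((\<lambda>t. A (t, y) * \<phi> (t, y)) has_vector_derivative A (x, y) * pd 0 \<phi> (x, y) + pd 0 A (x, y) * \<phi> (x, y)) (at x)" for x y
        using has_vector_derivative_mult[OF good_dx[OF gA] good_dx[OF g\<phi>]] by simp
    qed
    have GY: "set_lebesgue_integral lborel Disk (\<lambda>p. B p * pd 1 \<phi> p + pd 1 B p * \<phi> p) =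
      set_lebesgue_integral lborel circ_par (\<lambda>t. sin t *\<^sub>R (B (cos t, sin t) * \<phi> (cos t, sin t)))"
    proof (rule GreenY[where F="\<lambda>p. B p * \<phi> p"])
      show "continuous_on UNIV (\<lambda>p. B p * \<phi> p)" using cB c\<phi> by (auto intro!: continuous_intros)
      show "continuous_on UNIV (\<lambda>p. B p * pd 1 \<phi> p + pd 1 B p * \<phi> p)" using cB c\<phi> by (auto intro!: continuous_intros)
      show "((\<lambda>t. B (x, t) * \<phi> (x, t)) has_vector_derivative B (x, y) * pd 1 \<phi> (x, y) + pd 1 B (x, y) * \<phi> (x, y)) (at y)" for x y
        using has_vector_derivative_mult[OF good_dy[OF gB] good_dy[OF g\<phi>]] by simp
    qed
    have cc: "continuous_on UNIV (\<lambda>t. \<phi> (cos t, sin t))" "continuous_on UNIV (\<lambda>t. A (cos t, sin t))"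
        "continuous_on UNIV (\<lambda>t. B (cos t, sin t))"
      by (intro continuous_on_compose2[OF c\<phi>(1)] continuous_on_compose2[OF cA(1)] continuous_on_compose2[OF cB(1)] continuous_intros; simp)+
    have "set_lebesgue_integral lborel circ_par (\<lambda>t. hU U t * \<phi> (cos t, sin t)) =
       set_lebesgue_integral lborel circ_par (\<lambda>t. cos t *\<^sub>R (A (cos t, sin t) * \<phi> (cos t, sin t)) + sin t *\<^sub>R (B (cos t, sin t) * \<phi> (cos t, sin t)))"
      by (simp add: hU_def A_def B_def scaleR_conv_of_real algebra_simps)
    also have "\<dots> = set_lebesgue_integral lborel circ_par (\<lambda>t. cos t *\<^sub>R (A (cos t, sin t) * \<phi> (cos t, sin t)))
        + set_lebesgue_integral lborel circ_par (\<lambda>t. sin t *\<^sub>R (B (cos t, sin t) * \<phi> (cos t, sin t)))"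
    proof -
      have "set_integrable lborel circ_par (\<lambda>t. cos t *\<^sub>R (A (cos t, sin t) * \<phi> (cos t, sin t)))"
           "set_integrable lborel circ_par (\<lambda>t. sin t *\<^sub>R (B (cos t, sin t) * \<phi> (cos t, sin t)))"
        by (rule set_integrable_circ; intro continuous_intros cc)+
      then show ?thesis by (rule set_integral_add(2))
    qed
    also have "\<dots> = set_lebesgue_integral lborel Disk (\<lambda>p. A p * pd 0 \<phi> p + pd 0 A p * \<phi> p)
        + set_lebesgue_integral lborel Disk (\<lambda>p. B p * pd 1 \<phi> p + pd 1 B p * \<phi> p)"
      using GX GY by simp
    also have "\<dots> = set_lebesgue_integral lborel Disk (\<lambda>p. (A p * pd 0 \<phi> p + pd 0 A p * \<phi> p) + (B p * pd 1 \<phi> p + pd 1 B p * \<phi> p))"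
    proof -
      have "set_integrable lborel Disk (\<lambda>p. A p * pd 0 \<phi> p + pd 0 A p * \<phi> p)"
           "set_integrable lborel Disk (\<lambda>p. B p * pd 1 \<phi> p + pd 1 B p * \<phi> p)"
        by (rule set_integrable_Disk'; intro continuous_intros cA cB c\<phi>)+
      then show ?thesis by (rule set_integral_add(2)[symmetric])
    qed
    also have "\<dots> = set_lebesgue_integral lborel Disk (\<lambda>p. lapl U p * \<phi> p + (A p * pd 0 \<phi> p + B p * pd 1 \<phi> p))"
      by (simp add: lapl_def A_def B_def algebra_simps)
    also have "\<dots> = set_lebesgue_integral lborel Disk (\<lambda>p. lapl U p * \<phi> p)
            + set_lebesgue_integral lborel Disk (\<lambda>p. A p * pd 0 \<phi> p + B p * pd 1 \<phi> p)"
    proof -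
      have cl: "continuous_on UNIV (lapl U)" unfolding lapl_def A_def[symmetric] B_def[symmetric]
        using cA cB by (intro continuous_intros) auto
      have "set_integrable lborel Disk (\<lambda>p. lapl U p * \<phi> p)"
           "set_integrable lborel Disk (\<lambda>p. A p * pd 0 \<phi> p + B p * pd 1 \<phi> p)"
        by (rule set_integrable_Disk'; intro continuous_intros cA cB c\<phi> cl)+
      then show ?thesis by (rule set_integral_add(2))
    qed
    finally show ?thesis .
  qed
  show ?thesis
    unfolding normal_deriv_def
    using L2_circ[OF ch] w0 w1 wl main by (auto simp: A_def B_def)
qed



definition en :: "nat \<Rightarrow> real \<Rightarrow> complex" where
  "en n t = exp (\<i> * of_nat n * of_real t)"

lemma en_periodic: "en n (t + 2*pi) = en n t"
proof -
  have "exp (\<i> * of_nat n * of_real (2*pi)) = exp (\<i> * (of_real pi * 2)) ^ n"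
    by (subst exp_of_nat_mult[symmetric]) (simp add: algebra_simps)
  also have "\<dots> = 1" by simp
  finally have "exp (\<i> * of_nat n * of_real (2*pi)) = 1" .
  then show ?thesis unfolding en_def by (simp add: distrib_left exp_add)
qed

lemma en_deriv: "((\<lambda>t. \<beta> * en n t) has_vector_derivative (\<i> * of_nat n * \<beta>) * en n t) (at t)"
proof -
  have "((\<lambda>z. \<beta> * exp (\<i> * of_nat n * z)) has_field_derivative (\<i> * of_nat n * \<beta>) * exp (\<i> * of_nat n * of_real t)) (at (of_real t))"
    by (auto intro!: derivative_eq_intros simp: algebra_simps)
  from has_vector_derivative_real_field[OF this] show ?thesis unfolding en_def by simp
qed

lemma en_cont: "continuous_on UNIV (\<lambda>t. \<beta> * en n t)"
  unfolding en_def by (intro continuous_intros)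

lemma circ_IBP:
  fixes g g' \<psi> :: "real \<Rightarrow> complex"
  assumes dg: "\<And>t. (g has_vector_derivative g' t) (at t)" and cg': "continuous_on UNIV g'"
    and d\<psi>: "\<And>t. \<psi> differentiable (at t)" and c\<psi>': "continuous_on UNIV (vd \<psi>)"
    and per: "g (2*pi) * \<psi> (2*pi) = g 0 * \<psi> 0"
  shows "set_lebesgue_integral lborel circ_par (\<lambda>t. g t * vd \<psi> t) =
     - set_lebesgue_integral lborel circ_par (\<lambda>t. g' t * \<psi> t)"
proof -
  have d\<psi>': "(\<psi> has_vector_derivative vd \<psi> t) (at t)" for t
    using d\<psi>[of t] unfolding vd_def by (simp add: vector_derivative_works)
  have cg: "continuous_on UNIV g"
    by (rule continuous_at_imp_continuous_on) (use dg has_vector_derivative_continuous in blast)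
  have c\<psi>: "continuous_on UNIV \<psi>"
    by (rule continuous_at_imp_continuous_on) (use d\<psi>' has_vector_derivative_continuous in blast)
  have "(LBINT t=ereal 0..ereal (2*pi). g t * vd \<psi> t + g' t * \<psi> t) = g (2*pi) * \<psi> (2*pi) - g 0 * \<psi> 0"
  proof (rule interval_integral_FTC_finite)
    show "continuous_on {min 0 (2*pi)..max 0 (2*pi)} (\<lambda>t. g t * vd \<psi> t + g' t * \<psi> t)"
      by (rule continuous_on_subset[of UNIV]) (intro continuous_intros cg cg' c\<psi> c\<psi>', simp)
    show "((\<lambda>t. g t * \<psi> t) has_vector_derivative g x * vd \<psi> x + g' x * \<psi> x) (at x within {min 0 (2*pi)..max 0 (2*pi)})" for x
      using has_vector_derivative_mult[OF dg d\<psi>'] by (rule has_vector_derivative_at_within)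
  qed
  then have "set_lebesgue_integral lborel circ_par (\<lambda>t. g t * vd \<psi> t + g' t * \<psi> t) = 0"
    unfolding circ_par_def using interval_integral_Icc[of 0 "2*pi" "\<lambda>t. g t * vd \<psi> t + g' t * \<psi> t"] per
    by (simp add: zero_ereal_def)
  moreover have "set_lebesgue_integral lborel circ_par (\<lambda>t. g t * vd \<psi> t + g' t * \<psi> t) =
     set_lebesgue_integral lborel circ_par (\<lambda>t. g t * vd \<psi> t) + set_lebesgue_integral lborel circ_par (\<lambda>t. g' t * \<psi> t)"
  proof -
    have "set_integrable lborel circ_par (\<lambda>t. g t * vd \<psi> t)" "set_integrable lborel circ_par (\<lambda>t. g' t * \<psi> t)"
      by (rule set_integrable_circ; intro continuous_intros cg cg' c\<psi> c\<psi>')+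
    then show ?thesis by (rule set_integral_add(2))
  qed
  ultimately show ?thesis by (simp add: eq_neg_iff_add_eq_0)
qed

lemma test_circ_facts:
  assumes "test_circ \<psi>"
  shows "\<And>t. \<psi> differentiable (at t)" "\<And>t. vd \<psi> differentiable (at t)" "\<And>t. vd (vd \<psi>) differentiable (at t)"
    "\<psi> (2*pi) = \<psi> 0" "vd \<psi> (2*pi) = vd \<psi> 0"
    "continuous_on UNIV (vd \<psi>)" "continuous_on UNIV (vd (vd \<psi>))"
proof -
  have d: "\<And>k t. ((vd ^^ k) \<psi>) differentiable (at t)" and p: "\<And>t. \<psi> (t + 2*pi) = \<psi> t"
    using assms unfolding test_circ_def by auto
  show d0: "\<psi> differentiable (at t)" for t using d[of 0 t] by simp
  show d1: "vd \<psi> differentiable (at t)" for t using d[of 1 t] by simp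
  show d2: "vd (vd \<psi>) differentiable (at t)" for t using d[of 2 t] by (simp add: numeral_2_eq_2)
  show "\<psi> (2*pi) = \<psi> 0" using p[of 0] by simp
  show "continuous_on UNIV (vd \<psi>)"
    by (rule continuous_at_imp_continuous_on) (use d1 differentiable_imp_continuous_within in blast)
  show "continuous_on UNIV (vd (vd \<psi>))"
    by (rule continuous_at_imp_continuous_on) (use d2 differentiable_imp_continuous_within in blast)
  have eq: "\<psi> = \<psi> \<circ> (\<lambda>s. s + 2*pi)" using p by (auto simp: o_def)
  have "(\<psi> has_vector_derivative vd \<psi> (2*pi)) (at (0 + 2*pi))"
    using d0 unfolding vd_def by (simp add: vector_derivative_works)
  then have "((\<psi> \<circ> (\<lambda>s. s + 2*pi)) has_vector_derivative (1 *\<^sub>R vd \<psi> (2*pi))) (at 0)"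
    by (intro vector_diff_chain_at) (auto intro!: derivative_eq_intros)
  then have "(\<psi> has_vector_derivative vd \<psi> (2*pi)) (at 0)" using eq by simp
  then show "vd \<psi> (2*pi) = vd \<psi> 0" unfolding vd_def by (simp add: vector_derivative_at)
qed

lemma weak_circ_en:
  assumes "k \<le> 2"
  shows "weak_d_circ k (\<lambda>t. \<beta> * en n t) (\<lambda>t. (\<i> * of_nat n)^k * \<beta> * en n t)"
  unfolding weak_d_circ_def
proof (intro allI impI)
  fix \<psi> assume T: "test_circ \<psi>"
  note F = test_circ_facts[OF T]
  have perE: "\<gamma> * en n (2*pi) = \<gamma> * en n 0" for \<gamma> using en_periodic[of n 0] by simp
  have ibp1: "set_lebesgue_integral lborel circ_par (\<lambda>t. \<gamma> * en n t * vd \<psi> t) =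
       - set_lebesgue_integral lborel circ_par (\<lambda>t. (\<i> * of_nat n * \<gamma>) * en n t * \<psi> t)" for \<gamma>
    by (rule circ_IBP[where g="\<lambda>t. \<gamma> * en n t", OF en_deriv en_cont F(1) F(6)]) (simp add: perE F(4))
  have ibp2: "set_lebesgue_integral lborel circ_par (\<lambda>t. \<gamma> * en n t * vd (vd \<psi>) t) =
       - set_lebesgue_integral lborel circ_par (\<lambda>t. (\<i> * of_nat n * \<gamma>) * en n t * vd \<psi> t)" for \<gamma>
    by (rule circ_IBP[where g="\<lambda>t. \<gamma> * en n t", OF en_deriv en_cont F(2) F(7)]) (simp add: perE F(5))
  consider "k = 0" | "k = 1" | "k = 2" using assms by linarith
  then show "set_lebesgue_integral lborel circ_par (\<lambda>t. \<beta> * en n t * (vd ^^ k) \<psi> t) =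
         (- 1) ^ k * set_lebesgue_integral lborel circ_par (\<lambda>t. (\<i> * of_nat n) ^ k * \<beta> * en n t * \<psi> t)"
  proof cases
    case 1 then show ?thesis by simp
  next
    case 2 then show ?thesis using ibp1[of \<beta>] by simp
  next
    case 3
    have "(vd ^^ k) \<psi> = vd (vd \<psi>)" using 3 by (simp add: numeral_2_eq_2)
    moreover have "(\<lambda>t. \<i> * of_nat n * (\<i> * of_nat n * \<beta>) * en n t * \<psi> t) = (\<lambda>t. (\<i> * of_nat n)^k * \<beta> * en n t * \<psi> t)"
      using 3 by (simp add: power2_eq_square mult.assoc)
    ultimately show ?thesis using ibp2[of \<beta>] ibp1[of "\<i> * of_nat n * \<beta>"] 3 by simp
  qed
qed

lemma H2_circ_en: "H2_circ (\<lambda>t. \<beta> * en n t)"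
  unfolding H2_circ_def
proof (intro conjI allI impI)
  show "\<beta> * en n (t + 2 * pi) = \<beta> * en n t" for t by (simp add: en_periodic)
  show "L2_on circ_par (\<lambda>t. \<beta> * en n t)" by (rule L2_circ[OF en_cont])
  fix k :: nat assume k: "k \<le> 2"
  show "\<exists>h. L2_on circ_par h \<and> weak_d_circ k (\<lambda>t. \<beta> * en n t) h"
    using L2_circ[OF en_cont[of "(\<i> * of_nat n)^k * \<beta>" n]] weak_circ_en[OF k, of \<beta> n]
    by (auto simp: mult.assoc)
qed



lemma good_lift:
  assumes dx: "\<And>a b. ((\<lambda>a. G a b) has_field_derivative Gx a b) (at a)"
    and dy: "\<And>a b. ((\<lambda>b. G a b) has_field_derivative Gy a b) (at b)"
    and c: "continuous_on UNIV (lift G)" "continuous_on UNIV (lift Gx)" "continuous_on UNIV (lift Gy)"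
  shows "good (lift G)"
  unfolding good_def
proof (intro conjI allI)
  show "continuous_on UNIV (lift G)" by (rule c)
  show "continuous_on UNIV (pd 0 (lift G))" using c by (simp add: pd0_lift[OF dx])
  show "continuous_on UNIV (pd 1 (lift G))" using c by (simp add: pd1_lift[OF dy])
  fix p :: pt
  show "(\<lambda>t. lift G (t, snd p)) differentiable at (fst p)"
    by (rule differentiableI_vector[OF lift_dx[OF dx]])
  show "(\<lambda>t. lift G (fst p, t)) differentiable at (snd p)"
    by (rule differentiableI_vector[OF lift_dy[OF dy]])
qed

lemma cont_lifts:
  "continuous_on UNIV (lift (Uc n c \<mu>))" "continuous_on UNIV (lift (Uxc n c \<mu>))"
  "continuous_on UNIV (lift (Uyc n c \<mu>))" "continuous_on UNIV (lift (Uxxc n c \<mu>))"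
  "continuous_on UNIV (lift (Uxyc n c \<mu>))" "continuous_on UNIV (lift (Uyyc n c \<mu>))"
  unfolding lift_def Uc_def Uxc_def Uyc_def Uxxc_def Uxyc_def Uyyc_def Wc_def
  by (intro continuous_intros)+

lemma pd_U:
  "pd 0 (lift (Uc n c \<mu>)) = lift (Uxc n c \<mu>)" "pd 1 (lift (Uc n c \<mu>)) = lift (Uyc n c \<mu>)"
  "pd 0 (lift (Uxc n c \<mu>)) = lift (Uxxc n c \<mu>)" "pd 1 (lift (Uxc n c \<mu>)) = lift (Uxyc n c \<mu>)"
  "pd 0 (lift (Uyc n c \<mu>)) = lift (Uxyc n c \<mu>)" "pd 1 (lift (Uyc n c \<mu>)) = lift (Uyyc n c \<mu>)"
  by (rule pd0_lift pd1_lift, (rule Uc_dx Uc_dy Uxc_dx Uxc_dy Uyc_dx Uyc_dy), simp?)+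

lemma good2_U: "good2 (lift (Uc n c \<mu>))"
  unfolding good2_def pd_U
  using good_lift[OF Uc_dx Uc_dy cont_lifts(1,2,3)] good_lift[OF Uxc_dx Uxc_dy cont_lifts(2,4,5)]
    good_lift[OF Uyc_dx Uyc_dy cont_lifts(3,5,6)] by blast

lemma nW: "of_nat n * w^(n-1) * w = of_nat n * (w::complex)^n"
  by (cases n) auto

lemma lap_alg: "Uxxc n c \<mu> a b + Uyyc n c \<mu> a b = - 4 * \<mu> * Uc n c \<mu> a b"
proof -
  define W where "W = Wc a b"
  define x where "x = \<mu> * (a^2 + b^2)"
  have "Uxxc n c \<mu> a b + Uyyc n c \<mu> a b = c * (- 4 * \<mu> * (of_nat n * W^(n-1) * W) * Kf (Suc n) x
      - 4 * \<mu> * W^n * Kf (Suc n) x + 4 * \<mu> * x * W^n * Kf (Suc (Suc n)) x)"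
    unfolding Uxxc_def Uyyc_def W_def x_def Wc_def by (simp add: algebra_simps power2_eq_square)
  also have "\<dots> = c * (- 4 * \<mu>) * W^n * (of_nat (n+1) * Kf (n+1) x - x * Kf (n+2) x)"
    unfolding nW by (simp add: algebra_simps)
  also have "\<dots> = - 4 * \<mu> * Uc n c \<mu> a b"
    unfolding Kf_ode[symmetric] Uc_def W_def x_def by (simp add: algebra_simps)
  finally show ?thesis .
qed

lemma bd_alg:
  "a * Uxc n c \<mu> a b + b * Uyc n c \<mu> a b =
     c * (Wc a b)^n * (of_nat n * Kf n (\<mu> * (a^2 + b^2)) - 2 * \<mu> * (a^2 + b^2) * Kf (Suc n) (\<mu> * (a^2 + b^2)))"
proof -
  define W where "W = Wc a b"
  define x where "x = \<mu> * (a^2 + b^2)"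
  have "a * Uxc n c \<mu> a b + b * Uyc n c \<mu> a b =
     c * ((of_nat n * W^(n-1) * W) * Kf n x - 2 * \<mu> * (a^2 + b^2) * W^n * Kf (Suc n) x)"
    unfolding Uxc_def Uyc_def W_def x_def Wc_def by (simp add: algebra_simps power2_eq_square)
  also have "\<dots> = c * W^n * (of_nat n * Kf n x - 2 * \<mu> * (a^2 + b^2) * Kf (Suc n) x)"
    unfolding nW by (simp add: algebra_simps)
  finally show ?thesis unfolding W_def x_def .
qed



lemma W_circle: "Wc (of_real (cos t)) (of_real (sin t)) = exp (\<i> * of_real t)"
  by (simp add: Wc_def cis_conv_exp[symmetric] complex_eq_iff)

lemma W_circle_pow: "(Wc (of_real (cos t)) (of_real (sin t)))^n = en n t"
  unfolding W_circle en_def by (simp add: exp_of_nat_mult[symmetric] algebra_simps)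

lemma circ_sq: "(complex_of_real (cos t))^2 + (complex_of_real (sin t))^2 = 1"
proof -
  have "(complex_of_real (cos t))^2 + (complex_of_real (sin t))^2 = of_real ((cos t)^2 + (sin t)^2)"
    by (simp only: of_real_power[symmetric] of_real_add[symmetric])
  also have "(cos t)^2 + (sin t)^2 = 1" by (rule sin_cos_squared_add2)
  finally show ?thesis by simp
qed

lemma bd_U: "bd (lift (Uc n c \<mu>)) = (\<lambda>t. (c * Kf n \<mu>) * en n t)"
  by (rule ext) (simp add: bd_def lift_def Uc_def W_circle_pow circ_sq)

lemma hU_U: "hU (lift (Uc n c \<mu>)) = (\<lambda>t. (c * (of_nat n * Kf n \<mu> - 2 * \<mu> * Kf (Suc n) \<mu>)) * en n t)"
proof (rule ext)
  fix t
  have "hU (lift (Uc n c \<mu>)) t = of_real (cos t) * Uxc n c \<mu> (of_real (cos t)) (of_real (sin t))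
      + of_real (sin t) * Uyc n c \<mu> (of_real (cos t)) (of_real (sin t))"
    unfolding hU_def pd_U by (simp add: lift_def)
  also have "\<dots> = c * (Wc (of_real (cos t)) (of_real (sin t)))^n * (of_nat n * Kf n \<mu> - 2 * \<mu> * Kf (Suc n) \<mu>)"
    unfolding bd_alg circ_sq by simp
  finally show "hU (lift (Uc n c \<mu>)) t = (c * (of_nat n * Kf n \<mu> - 2 * \<mu> * Kf (Suc n) \<mu>)) * en n t"
    by (simp add: W_circle_pow)
qed

lemma lapl_U: "lapl (lift (Uc n c \<mu>)) p = - 4 * \<mu> * lift (Uc n c \<mu>) p"
  unfolding lapl_def pd_U by (simp add: lift_def lap_alg)

lemma dom_A_U: "dom_A (lift (Uc n c \<mu>))"
  unfolding dom_A_def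
proof (intro conjI)
  show "H2_disk (lift (Uc n c \<mu>))" by (rule H2_disk_good2[OF good2_U])
  show "continuous_on (cball 0 1) (lift (Uc n c \<mu>))"
    by (rule continuous_on_subset[OF cont_lifts(1)]) simp
  show "H2_circ (bd (lift (Uc n c \<mu>)))" unfolding bd_U by (rule H2_circ_en)
qed

lemma ring_aux:
  fixes N E X z c K :: complex
  shows "- (- N * (c*K) * E) + (c*X)*E + z*((c*K)*E) + z^2*((c*K)*E) = E * (c*((N + z + z^2)*K + X))"
  by (simp add: algebra_simps power2_eq_square)

lemma P_eq_U:
  assumes z1: "4 * \<mu> + z^2 = 0"
    and z2: "c * ((of_nat n ^ 2 + z + z^2) * Kf n \<mu> + (of_nat n * Kf n \<mu> - 2 * \<mu> * Kf (Suc n) \<mu>)) = 0"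
  shows "P_eq z (lift (Uc n c \<mu>)) (\<lambda>_. 0) (\<lambda>_. 0)"
  unfolding P_eq_def
proof (intro conjI)
  show "dom_A (lift (Uc n c \<mu>))" by (rule dom_A_U)
  show "\<exists>l. weak_lap (lift (Uc n c \<mu>)) l \<and>
        (AE p in lborel. p \<in> Disk \<longrightarrow> - l p + z\<^sup>2 * lift (Uc n c \<mu>) p = 0)"
  proof (intro exI conjI)
    show "weak_lap (lift (Uc n c \<mu>)) (lapl (lift (Uc n c \<mu>)))" by (rule weak_lap_good2[OF good2_U])
    have "- lapl (lift (Uc n c \<mu>)) p + z\<^sup>2 * lift (Uc n c \<mu>) p = 0" for p
    proof -
      have "- lapl (lift (Uc n c \<mu>)) p + z\<^sup>2 * lift (Uc n c \<mu>) p = (4 * \<mu> + z^2) * lift (Uc n c \<mu>) p"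
        unfolding lapl_U by (simp add: algebra_simps)
      then show ?thesis using z1 by simp
    qed
    then show "AE p in lborel. p \<in> Disk \<longrightarrow> - lapl (lift (Uc n c \<mu>)) p + z\<^sup>2 * lift (Uc n c \<mu>) p = 0"
      by simp
  qed
  show "\<exists>h d2. normal_deriv (lift (Uc n c \<mu>)) h \<and> weak_d_circ 2 (bd (lift (Uc n c \<mu>))) d2 \<and>
      (AE t in lborel. t \<in> circ_par \<longrightarrow>
         - d2 t + h t + z * bd (lift (Uc n c \<mu>)) t + z\<^sup>2 * bd (lift (Uc n c \<mu>)) t = 0)"
  proof (intro exI conjI)
    show "normal_deriv (lift (Uc n c \<mu>)) (hU (lift (Uc n c \<mu>)))" by (rule normal_deriv_good2[OF good2_U])
    show "weak_d_circ 2 (bd (lift (Uc n c \<mu>))) (\<lambda>t. (\<i> * of_nat n)^2 * (c * Kf n \<mu>) * en n t)"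
      unfolding bd_U by (rule weak_circ_en) simp
    have "- ((\<i> * of_nat n)^2 * (c * Kf n \<mu>) * en n t) + hU (lift (Uc n c \<mu>)) t
        + z * bd (lift (Uc n c \<mu>)) t + z\<^sup>2 * bd (lift (Uc n c \<mu>)) t
        = en n t * (c * ((of_nat n ^ 2 + z + z^2) * Kf n \<mu> + (of_nat n * Kf n \<mu> - 2 * \<mu> * Kf (Suc n) \<mu>)))" for t
    proof -
      have i2: "(\<i> * of_nat n)^2 = - (of_nat n ^ 2 :: complex)" by (simp add: power_mult_distrib)
      show ?thesis unfolding hU_U bd_U i2 by (rule ring_aux)
    qed
    then show "AE t in lborel. t \<in> circ_par \<longrightarrow> - ((\<i> * of_nat n)^2 * (c * Kf n \<mu>) * en n t)
       + hU (lift (Uc n c \<mu>)) t + z * bd (lift (Uc n c \<mu>)) t + z\<^sup>2 * bd (lift (Uc n c \<mu>)) t = 0"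
      using z2 by simp
  qed
qed



lemma mode_eq: "mode n lam = lift (Uc n ((lam/2)^n) (lam^2/4))"
proof
  fix p :: pt
  obtain x y where p: "p = (x,y)" by (cases p)
  define w where "w = Complex x y"
  define r where "r = norm (x,y)"
  define E where "E = exp (\<i> * of_real (Arg w))"
  have r: "r = cmod w" unfolding r_def w_def by (simp add: norm_Pair complex_norm)
  have polar: "complex_of_real r * E = w"
    using rcis_cmod_Arg[of w] unfolding rcis_def cis_conv_exp E_def r .
  have ex: "exp (\<i> * of_nat n * of_real (Arg w)) = E^n"
    unfolding E_def by (subst exp_of_nat_mult[symmetric]) (simp add: algebra_simps)
  have r2: "(complex_of_real r)^2 = (of_real x)^2 + (of_real y)^2"
  proof -
    have "r^2 = x^2 + y^2" unfolding r_def by (simp add: norm_Pair)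
    then have "(complex_of_real r)^2 = of_real (x^2 + y^2)" by (simp flip: of_real_power)
    then show ?thesis by simp
  qed
  have wW: "w = Wc (of_real x) (of_real y)" unfolding w_def Wc_def by (rule Complex_eq)
  have "mode n lam p = bessel_J n (lam * of_real r) * exp (\<i> * of_nat n * of_real (Arg w))"
    by (simp add: mode_def mode_polar_def p r_def w_def)
  also have "\<dots> = bessel_J n (lam * of_real r) * E^n" by (simp only: ex)
  also have "\<dots> = (lam * of_real r / 2)^n * Kf n ((lam * of_real r)^2/4) * E^n"
    by (simp add: bessel_Kf)
  also have "\<dots> = (lam/2)^n * (of_real r * E)^n * Kf n (lam^2/4 * (of_real r)^2)"
  proof -
    have a: "(lam * of_real r / 2)^n = (lam/2)^n * (of_real r)^n"
      by (simp add: power_mult_distrib[symmetric])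
    have b: "(lam * of_real r)^2/4 = lam^2/4 * (of_real r)^2"
      by (simp add: power_mult_distrib)
    show ?thesis unfolding a b by (simp add: power_mult_distrib)
  qed
  also have "\<dots> = lift (Uc n ((lam/2)^n) (lam^2/4)) p"
    unfolding polar r2 wW by (simp add: lift_def Uc_def p)
  finally show "mode n lam p = lift (Uc n ((lam/2)^n) (lam^2/4)) p" .
qed

lemma open_AE_empty:
  fixes S :: "pt set"
  assumes oS: "open S" and ae: "AE x in lborel. x \<notin> S"
  shows "S = {}"
proof (rule ccontr)
  assume "S \<noteq> {}"
  then obtain x where xS: "x \<in> S" by blast
  obtain a b where box: "box a b \<subseteq> S" "x \<in> box a b" "\<forall>i\<in>Basis. a \<bullet> i < b \<bullet> i"
    using open_contains_box[OF oS xS] by blast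
  have "AE y in lborel. y \<notin> box a b" using ae by (rule eventually_mono) (use box(1) in blast)
  then have z: "emeasure lborel (box a b) = 0"
    using AE_iff_measurable[of "box a b" lborel "\<lambda>y. y \<notin> box a b"] by simp
  have pos: "0 < (\<Prod>i\<in>Basis. (b - a) \<bullet> i)"
    using box(3) by (intro prod_pos) (simp add: inner_diff_left)
  have "emeasure lborel (box a b) = (\<Prod>i\<in>Basis. (b - a) \<bullet> i)"
    using box(3) by (intro emeasure_lborel_box) (simp add: less_imp_le)
  with z have "ennreal (\<Prod>i\<in>Basis. (b - a) \<bullet> i) = 0" by simp
  then have "(\<Prod>i\<in>Basis. (b - a) \<bullet> i) \<le> 0" by (simp only: ennreal_eq_0_iff)
  with pos show False by simp
qed

lemma mode_nonzero:
  assumes lam: "lam \<noteq> 0"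
  shows "\<not> (AE p in lborel. p \<in> Disk \<longrightarrow> mode n lam p = 0)"
proof
  assume ae: "AE p in lborel. p \<in> Disk \<longrightarrow> mode n lam p = 0"
  define U where "U = lift (Uc n ((lam/2)^n) (lam^2/4))"
  have cU: "continuous_on UNIV U" unfolding U_def by (rule cont_lifts(1))
  define f where "f t = Kf n (lam^2/4 * (of_real t)^2)" for t :: real
  have cf: "continuous (at 0) f"
  proof -
    have "continuous_on UNIV f" unfolding f_def by (intro continuous_intros)
    then show ?thesis by (simp add: continuous_on_eq_continuous_at)
  qed
  have f0: "f 0 \<noteq> 0" unfolding f_def by (simp add: Kf_0)
  obtain e where e: "e > 0" "\<And>y. dist 0 y < e \<Longrightarrow> f y \<noteq> 0"
    using continuous_at_avoid[OF cf f0] by blast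
  define t0 where "t0 = min (e/2) (1/2)"
  have t0: "0 < t0" "t0 < e" "t0 < 1" unfolding t0_def using e by auto
  have ft0: "f t0 \<noteq> 0" using e(2)[of t0] t0 by simp
  have "U (t0, 0) = (lam/2)^n * (of_real t0)^n * f t0"
    unfolding U_def lift_def Uc_def Wc_def f_def by simp
  then have U0: "U (t0, 0) \<noteq> 0" using lam t0 ft0 by simp
  have "t0 * t0 < 1 * 1" using t0 by (intro mult_strict_mono) auto
  then have D0: "(t0, 0) \<in> Disk" unfolding Disk_iff by (simp add: power2_eq_square)
  define S where "S = Disk \<inter> U -` (- {0})"
  have oS: "open S" unfolding S_def Disk_def
    by (intro open_Int open_ball continuous_open_vimage) (auto simp: cU[unfolded continuous_on_eq_continuous_at[OF open_UNIV]])
  have "AE p in lborel. p \<notin> S" using ae unfolding S_def mode_eq U_def[symmetric]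
    by (rule eventually_mono) auto
  then have "S = {}" by (rule open_AE_empty[OF oS])
  moreover have "(t0, 0) \<in> S" unfolding S_def using D0 U0 by simp
  ultimately show False by simp
qed

lemma zero_lift: "(\<lambda>_. 0) = lift (Uc n 0 \<mu>)"
  by (rule ext) (simp add: lift_def Uc_def)

lemma in_spec:
  assumes PU: "P_eq z U (\<lambda>_. 0) (\<lambda>_. 0)" and P0: "P_eq z (\<lambda>_. 0) (\<lambda>_. 0) (\<lambda>_. 0)"
    and nz: "\<not> (AE p in lborel. p \<in> Disk \<longrightarrow> U p = 0)"
  shows "z \<in> spec_P"
  unfolding spec_P_def P_invertible_def
proof (clarify)
  fix R :: "(pt \<Rightarrow> complex) \<Rightarrow> (real \<Rightarrow> complex) \<Rightarrow> pt \<Rightarrow> complex"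
  assume R1: "\<forall>f g. inH f g \<longrightarrow> P_eq z (R f g) f g"
    and R2: "\<forall>u f g. inH f g \<longrightarrow> P_eq z u f g \<longrightarrow> eqH (R f g) (bd (R f g)) u (bd u)"
  have i0: "inH (\<lambda>_. 0) (\<lambda>_. 0)" unfolding inH_def by (intro conjI L2_Disk L2_circ) simp_all
  have e1: "eqH (R (\<lambda>_. 0) (\<lambda>_. 0)) (bd (R (\<lambda>_. 0) (\<lambda>_. 0))) U (bd U)" using R2 i0 PU by blast
  have e2: "eqH (R (\<lambda>_. 0) (\<lambda>_. 0)) (bd (R (\<lambda>_. 0) (\<lambda>_. 0))) (\<lambda>_. 0) (bd (\<lambda>_. 0))" using R2 i0 P0 by blast
  have a1: "AE p in lborel. p \<in> Disk \<longrightarrow> R (\<lambda>_. 0) (\<lambda>_. 0) p = U p" using e1 unfolding eqH_def by blast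
  have a2: "AE p in lborel. p \<in> Disk \<longrightarrow> R (\<lambda>_. 0) (\<lambda>_. 0) p = 0" using e2 unfolding eqH_def by blast
  have "AE p in lborel. p \<in> Disk \<longrightarrow> U p = 0"
    using a1 a2 by eventually_elim auto
  with nz show False by simp
qed

theorem lemma3p18:
  fixes n :: nat and lam :: complex
  assumes "lam \<noteq> 0"
    and "(of_nat n ^ 2 + \<i> * lam - lam ^ 2) * bessel_J n lam + lam * deriv (bessel_J n) lam = 0"
  shows "\<i> * lam \<in> spec_P \<and> dom_A (mode n lam) \<and>
         \<not> eqH (mode n lam) (bd (mode n lam)) (\<lambda>_. 0) (\<lambda>_. 0) \<and>
         P_eq (\<i> * lam) (mode n lam) (\<lambda>_. 0) (\<lambda>_. 0)"
proof -
  define c where "c = (lam/2)^n"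
  define \<mu> where "\<mu> = lam^2/4"
  have z1: "4 * \<mu> + (\<i> * lam)^2 = 0" unfolding \<mu>_def by (simp add: power_mult_distrib)
  have B: "bessel_J n lam = c * Kf n \<mu>" unfolding c_def \<mu>_def by (rule bessel_Kf)
  have D: "lam * deriv (bessel_J n) lam = c * (of_nat n * Kf n \<mu> - lam^2/2 * Kf (Suc n) \<mu>)"
    unfolding c_def \<mu>_def by (rule bessel_zderiv)
  have ring: "A * (c * K) + c * X = c * (A * K + X)" for A K X :: complex by (simp add: algebra_simps)
  have hyp: "c * ((of_nat n ^ 2 + \<i> * lam - lam ^ 2) * Kf n \<mu> + (of_nat n * Kf n \<mu> - lam^2/2 * Kf (Suc n) \<mu>)) = 0"
    using assms(2) unfolding B D ring .
  have e1: "(\<i> * lam)^2 = - (lam^2)" by (simp add: power_mult_distrib)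
  have e2: "2 * \<mu> = lam^2/2" unfolding \<mu>_def by simp
  have e3: "of_nat n ^ 2 + \<i> * lam + - (lam^2) = of_nat n ^ 2 + \<i> * lam - lam^2" by simp
  have z2: "c * ((of_nat n ^ 2 + \<i> * lam + (\<i> * lam)^2) * Kf n \<mu> + (of_nat n * Kf n \<mu> - 2 * \<mu> * Kf (Suc n) \<mu>)) = 0"
    unfolding e1 e2 e3 by (rule hyp)
  have mU: "mode n lam = lift (Uc n c \<mu>)" unfolding c_def \<mu>_def by (rule mode_eq)
  have PU: "P_eq (\<i> * lam) (mode n lam) (\<lambda>_. 0) (\<lambda>_. 0)"
    unfolding mU by (rule P_eq_U[OF z1 z2])
  have P0: "P_eq (\<i> * lam) (\<lambda>_. 0) (\<lambda>_. 0) (\<lambda>_. 0)"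
  proof -
    have "P_eq (\<i> * lam) (lift (Uc n 0 \<mu>)) (\<lambda>_. 0) (\<lambda>_. 0)" by (rule P_eq_U[OF z1]) simp
    then show ?thesis by (simp only: zero_lift[symmetric])
  qed
  have nz: "\<not> (AE p in lborel. p \<in> Disk \<longrightarrow> mode n lam p = 0)" by (rule mode_nonzero[OF assms(1)])
  show ?thesis
  proof (intro conjI)
    show "\<i> * lam \<in> spec_P" by (rule in_spec[OF PU P0 nz])
    show "dom_A (mode n lam)" unfolding mU by (rule dom_A_U)
    show "\<not> eqH (mode n lam) (bd (mode n lam)) (\<lambda>_. 0) (\<lambda>_. 0)" using nz unfolding eqH_def by blast
    show "P_eq (\<i> * lam) (mode n lam) (\<lambda>_. 0) (\<lambda>_. 0)" by (rule PU)
  qed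
qed

end
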